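(* Let $\beta\in(1,\beta_*]$, where $\beta_*\approx1.4656$ is the real root of $x^3-x^2-1=0$. Then the dynamical systems $(\Omega\times\Upsilon\times S_\beta,\mathcal A\times\mathcal B\times\mathcal S,\nu_\beta,K_\beta)$ and $(\Upsilon,\mathcal B,\mathbb P,\sigma')$ are isomorphic, where $\nu_\beta(A)=\mathbb P(\varphi(Z\cap A))$ for $A\in\mathcal A\times\mathcal B\times\mathcal S$.
   Context: $\vec q_0=(0,0)$, $\vec q_1=(1,0)$, $\vec q_2=(0,1)$; $S_\beta$ is the attractor of the IFS $f_{\vec q_i}(\vec z)=(\vec z+\vec q_i)/\beta$ (here the closed triangle with vertices $(0,0)$, $(\frac1{\beta-1},0)$, $(0,\frac1{\beta-1})$), $\mathcal S$ its Borel $\sigma$-algebra. Subsets of $S_\beta$: $E_0=[0,\frac1\beta)\times[0,\frac1\beta)$; $E_1=\{0\le y<\frac1\beta,\ \frac{1}{\beta(\beta-1)}<x+y\le\frac{1}{\beta-1}\}$; $E_2=\{0\le x<\frac1\beta,\ \frac{1}{\beta(\beta-1)}<x+y\le\frac{1}{\beta-1}\}$; $C_{01}=\{x\ge\frac1\beta,\ 0\le y<\frac1\beta,\ x+y\le\frac{1}{\beta(\beta-1)}\}$; $C_{12}=\{x\ge\frac1\beta,\ y\ge\frac1\beta,\ \frac{1}{\beta(\beta-1)}<x+y\le\frac{1}{\beta-1}\}$; $C_{02}=\{0\le x<\frac1\beta,\ y\ge\frac1\beta,\ x+y\le\frac{1}{\beta(\beta-1)}\}$; $C_{012}=\{x\ge\frac1\beta,\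 y\ge\frac1\beta,\ x+y\le\frac{1}{\beta(\beta-1)}\}$; $C=C_{01}\cup C_{12}\cup C_{02}$. $\Omega=\{0,1\}^{\mathbb N}$, $\Upsilon=\{0,1,2\}^{\mathbb N}$ with product $\sigma$-algebras $\mathcal A,\mathcal B$ and left shifts $\sigma,\sigma'$; $\mathbb P$ is the uniform product measure on $\Upsilon$. $K_\beta$ on $\Omega\times\Upsilon\times S_\beta$: $K_\beta(\omega,\upsilon,\vec z)=(\omega,\upsilon,\beta\vec z-\vec q_i)$ if $\vec z\in E_i$; $(\sigma\omega,\upsilon,\beta\vec z-\vec q_i)$ if $\omega_1=0$, $\vec z\in C_{ij}$ ($ij\in\{01,12,02\}$); $(\sigma\omega,\upsilon,\beta\vec z-\vec q_j)$ if $\omega_1=1$, $\vec z\in C_{ij}$; $(\omega,\sigma'\upsilon,\beta\vec z-\vec q_i)$ if $\vec z\in C_{012}$, $\upsilon_1=i$. The digit $d_1(\omega,\upsilon,\vec z)$ is the vector subtracted, $d_n=d_1\circ K_\beta^{n-1}$. $\varphi:\Omega\times\Upsilon\times S_\beta\to\Upsilon$, $\varphi(\omega,\upsilon,\vec z)=(b_1,b_2,\ldots)$ with $d_n(\omega,\upsilon,\vec z)=\vec q_{b_n}$. $Z$ is the set of points whose $K_\beta$-orbit lies in $\Omega\times\Upsilon\times C$ for infinitely many times and in $\Omega\times\Upsilon\times C_{012}$ for infinitely many times. *)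

theory Defs
  imports "HOL-Probability.Probability"
begin

definition beta_star :: real where
  "beta_star = (THE x::real. x^3 - x^2 - 1 = 0)"

definition qv :: "nat \<Rightarrow> real \<times> real" where
  "qv i = (if i = 1 then (1,0) else if i = 2 then (0,1) else (0,0))"

definition S_beta :: "real \<Rightarrow> (real \<times> real) set" where
  "S_beta \<beta> = {(x,y). 0 \<le> x \<and> 0 \<le> y \<and> x + y \<le> 1/(\<beta>-1)}"

definition E0 :: "real \<Rightarrow> (real \<times> real) set" where
  "E0 \<beta> = S_beta \<beta> \<inter> {(x,y). 0 \<le> x \<and> x < 1/\<beta> \<and> 0 \<le> y \<and> y < 1/\<beta>}"
definition E1 :: "real \<Rightarrow> (real \<times> real) set" where
  "E1 \<beta> = S_beta \<beta> \<inter> {(x,y). 0 \<le> y \<and> y < 1/\<beta> \<and> 1/(\<beta>*(\<beta>-1)) < x + y \<and> x + y \<le> 1/(\<beta>-1)}"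
definition E2 :: "real \<Rightarrow> (real \<times> real) set" where
  "E2 \<beta> = S_beta \<beta> \<inter> {(x,y). 0 \<le> x \<and> x < 1/\<beta> \<and> 1/(\<beta>*(\<beta>-1)) < x + y \<and> x + y \<le> 1/(\<beta>-1)}"
definition C01 :: "real \<Rightarrow> (real \<times> real) set" where
  "C01 \<beta> = S_beta \<beta> \<inter> {(x,y). x \<ge> 1/\<beta> \<and> 0 \<le> y \<and> y < 1/\<beta> \<and> x + y \<le> 1/(\<beta>*(\<beta>-1))}"
definition C12 :: "real \<Rightarrow> (real \<times> real) set" where
  "C12 \<beta> = S_beta \<beta> \<inter> {(x,y). x \<ge> 1/\<beta> \<and> y \<ge> 1/\<beta> \<and> 1/(\<beta>*(\<beta>-1)) < x + y \<and> x + y \<le> 1/(\<beta>-1)}"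
definition C02 :: "real \<Rightarrow> (real \<times> real) set" where
  "C02 \<beta> = S_beta \<beta> \<inter> {(x,y). 0 \<le> x \<and> x < 1/\<beta> \<and> y \<ge> 1/\<beta> \<and> x + y \<le> 1/(\<beta>*(\<beta>-1))}"
definition C012 :: "real \<Rightarrow> (real \<times> real) set" where
  "C012 \<beta> = S_beta \<beta> \<inter> {(x,y). x \<ge> 1/\<beta> \<and> y \<ge> 1/\<beta> \<and> x + y \<le> 1/(\<beta>*(\<beta>-1))}"
definition Cset :: "real \<Rightarrow> (real \<times> real) set" where
  "Cset \<beta> = C01 \<beta> \<union> C12 \<beta> \<union> C02 \<beta>"

text \<open>Left shift on sequences (index 0 plays the role of the paper's index 1).\<close>
definition sshift :: "(nat \<Rightarrow> nat) \<Rightarrow> (nat \<Rightarrow> nat)" where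
  "sshift w = (\<lambda>n. w (Suc n))"

type_synonym point = "(nat \<Rightarrow> nat) \<times> (nat \<Rightarrow> nat) \<times> (real \<times> real)"

text \<open>Index b of the digit d_1 = q_b subtracted by K_beta.\<close>
definition dig :: "real \<Rightarrow> point \<Rightarrow> nat" where
  "dig \<beta> p = (case p of (\<omega>, \<upsilon>, z) \<Rightarrow>
     if z \<in> E0 \<beta> then 0
     else if z \<in> E1 \<beta> then 1
     else if z \<in> E2 \<beta> then 2
     else if z \<in> C01 \<beta> then (if \<omega> 0 = 0 then 0 else 1)
     else if z \<in> C12 \<beta> then (if \<omega> 0 = 0 then 1 else 2)
     else if z \<in> C02 \<beta> then (if \<omega> 0 = 0 then 0 else 2)
     else if z \<in> C012 \<beta> then \<upsilon> 0
     else 0)"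

definition K :: "real \<Rightarrow> point \<Rightarrow> point" where
  "K \<beta> p = (case p of (\<omega>, \<upsilon>, z) \<Rightarrow>
     (if z \<notin> E0 \<beta> \<union> E1 \<beta> \<union> E2 \<beta> \<and> z \<in> Cset \<beta> then sshift \<omega> else \<omega>,
      if z \<notin> E0 \<beta> \<union> E1 \<beta> \<union> E2 \<beta> \<union> Cset \<beta> \<and> z \<in> C012 \<beta> then sshift \<upsilon> else \<upsilon>,
      (\<beta> * fst z - fst (qv (dig \<beta> p)), \<beta> * snd z - snd (qv (dig \<beta> p)))))"

text \<open>phi: the sequence of digit indices b_1 b_2 ... (stored from index 0).\<close>
definition phi :: "real \<Rightarrow> point \<Rightarrow> (nat \<Rightarrow> nat)" where
  "phi \<beta> p = (\<lambda>n. dig \<beta> ((K \<beta> ^^ n) p))"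

definition Omega_M :: "(nat \<Rightarrow> nat) measure" where
  "Omega_M = PiM UNIV (\<lambda>_::nat. count_space {0,1::nat})"

definition P_M :: "(nat \<Rightarrow> nat) measure" where
  "P_M = PiM UNIV (\<lambda>_::nat. uniform_count_measure {0,1,2::nat})"

definition Ups_M :: "(nat \<Rightarrow> nat) measure" where
  "Ups_M = PiM UNIV (\<lambda>_::nat. count_space {0,1,2::nat})"

definition X_M :: "real \<Rightarrow> point measure" where
  "X_M \<beta> = Omega_M \<Otimes>\<^sub>M (Ups_M \<Otimes>\<^sub>M restrict_space borel (S_beta \<beta>))"

definition Z :: "real \<Rightarrow> point set" where
  "Z \<beta> = {p \<in> space (X_M \<beta>).
            infinite {n. snd (snd ((K \<beta> ^^ n) p)) \<in> Cset \<beta>} \<and>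
            infinite {n. snd (snd ((K \<beta> ^^ n) p)) \<in> C012 \<beta>}}"

definition nu_fun :: "real \<Rightarrow> point set \<Rightarrow> ennreal" where
  "nu_fun \<beta> A = emeasure P_M (phi \<beta> ` (Z \<beta> \<inter> A))"

definition nu :: "real \<Rightarrow> point measure" where
  "nu \<beta> = measure_of (space (X_M \<beta>)) (sets (X_M \<beta>)) (nu_fun \<beta>)"

definition mpreserving :: "'a measure \<Rightarrow> ('a \<Rightarrow> 'a) \<Rightarrow> bool" where
  "mpreserving M T \<longleftrightarrow> T \<in> measurable M M \<and>
     (\<forall>A \<in> sets M. emeasure M (T -` A \<inter> space M) = emeasure M A)"

definition mps_isomorphic :: "'a measure \<Rightarrow> ('a \<Rightarrow> 'a) \<Rightarrow> 'b measure \<Rightarrow> ('b \<Rightarrow> 'b) \<Rightarrow> bool" where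
  "mps_isomorphic M T M' T' \<longleftrightarrow> mpreserving M T \<and> mpreserving M' T' \<and>
     (\<exists>N N' \<psi>. N \<in> sets M \<and> N' \<in> sets M' \<and>
        emeasure M (space M - N) = 0 \<and> emeasure M' (space M' - N') = 0 \<and>
        T ` N \<subseteq> N \<and> T' ` N' \<subseteq> N' \<and>
        bij_betw \<psi> N N' \<and>
        \<psi> \<in> measurable (restrict_space M N) (restrict_space M' N') \<and>
        the_inv_into N \<psi> \<in> measurable (restrict_space M' N') (restrict_space M N) \<and>
        (\<forall>x \<in> N. \<psi> (T x) = T' (\<psi> x)) \<and>
        (\<forall>A \<in> sets M'. emeasure M (\<psi> -` A \<inter> N) = emeasure M' A))"

end

theory Submission
  imports Defs
begin

lemma g_mono_strict:
  fixes x y :: real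
  assumes "1 \<le> x" "x < y"
  shows "x^3 - x^2 < y^3 - y^2"
proof -
  have "y^3 - y^2 - (x^3 - x^2) = (y - x) * (y*(y-1) + x*(x-1) + x*y)"
    by (simp add: algebra_simps power2_eq_square power3_eq_cube)
  moreover have "y*(y-1) \<ge> 0" "x*(x-1) \<ge> 0" "x*y > 0" using assms by auto
  moreover have "y - x > 0" using assms by auto
  ultimately show ?thesis by (smt (verit) mult_pos_pos)
qed

lemma g_root_gt1:
  fixes x :: real
  assumes "x^3 - x^2 - 1 = 0" shows "1 < x"
proof (rule ccontr)
  assume "\<not> 1 < x"
  hence "x^2 * (x - 1) \<le> 0" by (simp add: mult_nonneg_nonpos)
  moreover have "x^3 - x^2 = x^2 * (x - 1)" by (simp add: algebra_simps power2_eq_square power3_eq_cube)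
  ultimately show False using assms by simp
qed

lemma beta_star_prop: "beta_star^3 - beta_star^2 - 1 = 0 \<and> 1 < beta_star \<and> beta_star < 3/2"
proof -
  have ex: "\<exists>x::real. 1 \<le> x \<and> x \<le> 2 \<and> x^3 - x^2 - 1 = 0"
    by (rule IVT) (auto intro!: continuous_intros)
  have uniq: "\<And>x y::real. x^3 - x^2 - 1 = 0 \<Longrightarrow> y^3 - y^2 - 1 = 0 \<Longrightarrow> x = y"
  proof -
    fix x y :: real assume h: "x^3 - x^2 - 1 = 0" "y^3 - y^2 - 1 = 0"
    have "1 < x" "1 < y" using h g_root_gt1 by auto
    show "x = y"
    proof (rule ccontr)
      assume "x \<noteq> y"
      hence "x < y \<or> y < x" by auto
      thus False using g_mono_strict[of x y] g_mono_strict[of y x] h \<open>1<x\<close> \<open>1<y\<close> by auto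
    qed
  qed
  have th: "beta_star^3 - beta_star^2 - 1 = 0"
    unfolding beta_star_def using ex uniq by (metis (mono_tags, lifting) theI)
  have "1 < beta_star" using th g_root_gt1 by auto
  moreover have "beta_star < 3/2"
  proof (rule ccontr)
    assume "\<not> beta_star < 3/2"
    hence "3/2 = beta_star \<or> 3/2 < beta_star" by auto
    hence "(3/2::real)^3 - (3/2)^2 \<le> beta_star^3 - beta_star^2"
    proof
      assume "3/2 = beta_star" thus ?thesis by (metis order_refl)
    next
      assume "3/2 < beta_star" thus ?thesis using g_mono_strict[of "3/2" beta_star] by simp
    qed
    thus False using th by (simp add: power3_eq_cube power2_eq_square)
  qed
  ultimately show ?thesis using th by auto
qed

locale bset =
  fixes \<beta> :: real
  assumes b1: "1 < \<beta>" and bstar: "\<beta> \<le> beta_star"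
begin

lemma b32: "\<beta> < 3/2" using bstar beta_star_prop by auto

lemma g_le: "\<beta>^3 \<le> \<beta>^2 + 1"
proof -
  have "\<beta>^3 - \<beta>^2 \<le> beta_star^3 - beta_star^2"
    using g_mono_strict[of \<beta> beta_star] bstar b1 by (cases "\<beta> = beta_star") auto
  thus ?thesis using beta_star_prop by auto
qed

end

definition ind :: "nat \<Rightarrow> nat \<Rightarrow> real" where "ind d c = (if c = d then 1 else 0)"

context bset begin

definition ser :: "(nat \<Rightarrow> real) \<Rightarrow> real" where "ser f = (\<Sum>n. f n / \<beta>^Suc n)"

lemma geo_sums: "(\<lambda>n. 1 / \<beta>^Suc n) sums (1/(\<beta>-1))"
proof -
  have "norm (1/\<beta>) < 1" using b1 by simp
  hence "(\<lambda>n. (1/\<beta>)^n) sums (1/(1-1/\<beta>))" by (rule geometric_sums)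
  hence "(\<lambda>n. 1/\<beta> * (1/\<beta>)^n) sums (1/\<beta> * (1/(1-1/\<beta>)))" by (rule sums_mult)
  moreover have "1/\<beta> * (1/(1-1/\<beta>)) = 1/(\<beta>-1)" using b1 by (simp add: field_simps)
  moreover have "\<And>n. 1/\<beta> * (1/\<beta>)^n = 1/\<beta>^Suc n" by (simp add: power_one_over)
  ultimately show ?thesis by simp
qed

lemma ser_summable: assumes "\<And>n. \<bar>f n\<bar> \<le> 1" shows "summable (\<lambda>n. f n / \<beta>^Suc n)"
proof (rule summable_comparison_test[OF _ sums_summable[OF geo_sums]])
  show "\<exists>N. \<forall>n\<ge>N. norm (f n / \<beta> ^ Suc n) \<le> 1 / \<beta> ^ Suc n"
    using assms b1 by (auto simp: abs_divide divide_right_mono)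
qed

lemma ser_bounds: assumes "\<And>n. 0 \<le> f n" "\<And>n. f n \<le> 1"
  shows "0 \<le> ser f" "ser f \<le> 1/(\<beta>-1)"
proof -
  have ab: "\<And>n. \<bar>f n\<bar> \<le> 1" using assms by (simp add: abs_le_iff)
  show "0 \<le> ser f" unfolding ser_def
    using assms b1 by (intro suminf_nonneg ser_summable ab) auto
  show "ser f \<le> 1/(\<beta>-1)" unfolding ser_def sums_unique[OF geo_sums]
    using assms b1 by (intro suminf_le ser_summable ab sums_summable[OF geo_sums]) (auto intro!: divide_right_mono)
qed

lemma ser_step: assumes "\<And>n. \<bar>f n\<bar> \<le> 1"
  shows "ser f = (f 0 + ser (\<lambda>n. f (Suc n))) / \<beta>"
proof -
  have s: "summable (\<lambda>n. f n / \<beta>^Suc n)" by (rule ser_summable[OF assms])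
  have "(\<Sum>n. f (Suc n) / \<beta>^Suc (Suc n)) = ser f - f 0 / \<beta>"
    unfolding ser_def using suminf_split_head[OF s] by simp
  moreover have "(\<Sum>n. f (Suc n) / \<beta>^Suc (Suc n)) = ser (\<lambda>n. f (Suc n)) / \<beta>"
  proof -
    have s2: "summable (\<lambda>n. f (Suc n)/\<beta>^Suc n)" by (rule ser_summable) (simp add: assms)
    have "\<And>n. f (Suc n)/\<beta>^Suc (Suc n) = f (Suc n)/\<beta>^Suc n/\<beta>" by (simp add: mult.commute)
    hence "(\<lambda>n. f (Suc n)/\<beta>^Suc (Suc n)) = (\<lambda>n. f (Suc n)/\<beta>^Suc n/\<beta>)" by (rule ext)
    thus ?thesis unfolding ser_def using suminf_divide[OF s2, of \<beta>] by (simp only:)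
  qed
  ultimately show ?thesis using b1 by (simp add: field_simps)
qed

lemma ser_add: assumes "\<And>n. \<bar>f n\<bar> \<le> 1" "\<And>n. \<bar>g n\<bar> \<le> 1"
  shows "ser f + ser g = ser (\<lambda>n. f n + g n)"
  unfolding ser_def using suminf_add[OF ser_summable[OF assms(1)] ser_summable[OF assms(2)]]
  by (simp add: add_divide_distrib)

lemma ind_abs: "\<bar>ind d c\<bar> \<le> 1" by (simp add: ind_def)
lemma ind_nn: "0 \<le> ind d c" by (simp add: ind_def)
lemma ind_le: "ind d c \<le> 1" by (simp add: ind_def)
lemma ind12: "ind 1 c + ind 2 c \<le> 1" by (simp add: ind_def)
lemma ind12_abs: "\<bar>ind 1 c + ind 2 c\<bar> \<le> 1" by (simp add: ind_def)

definition zx :: "(nat \<Rightarrow> nat) \<Rightarrow> real" where "zx b = ser (\<lambda>n. ind 1 (b n))"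
definition zy :: "(nat \<Rightarrow> nat) \<Rightarrow> real" where "zy b = ser (\<lambda>n. ind 2 (b n))"
definition zeta :: "(nat \<Rightarrow> nat) \<Rightarrow> real \<times> real" where "zeta b = (zx b, zy b)"

lemma zx_bounds: "0 \<le> zx b" "zx b \<le> 1/(\<beta>-1)"
  unfolding zx_def by (rule ser_bounds; simp add: ind_nn ind_le)+
lemma zy_bounds: "0 \<le> zy b" "zy b \<le> 1/(\<beta>-1)"
  unfolding zy_def by (rule ser_bounds; simp add: ind_nn ind_le)+
lemma zsum_le: "zx b + zy b \<le> 1/(\<beta>-1)"
  unfolding zx_def zy_def
  by (subst ser_add) (auto intro!: ser_bounds simp: ind_abs ind12 add_nonneg_nonneg ind_nn ind_def)

lemma zx_step: "zx b = (ind 1 (b 0) + zx (sshift b)) / \<beta>"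
  unfolding zx_def sshift_def by (subst ser_step) (auto simp: ind_abs)
lemma zy_step: "zy b = (ind 2 (b 0) + zy (sshift b)) / \<beta>"
  unfolding zy_def sshift_def by (subst ser_step) (auto simp: ind_abs)

lemma zeta_S: "zeta b \<in> S_beta \<beta>"
  unfolding zeta_def S_beta_def using zx_bounds zy_bounds zsum_le by auto

lemma zeta_shift: "zeta (sshift b) = (\<beta> * fst (zeta b) - fst (qv (b 0)), \<beta> * snd (zeta b) - snd (qv (b 0)))"
  unfolding zeta_def using zx_step[of b] zy_step[of b] b1
  by (auto simp: qv_def ind_def field_simps)

end

context bset begin

lemma key2: "2/\<beta> \<le> 1/(\<beta>*(\<beta>-1))"
  using b1 b32 by (simp add: field_simps)
lemma ct: "\<beta> * (1/(\<beta>*(\<beta>-1))) = 1/(\<beta>-1)" using b1 by (simp add: field_simps)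
lemma tt: "\<beta> * (1/(\<beta>-1)) - 1 = 1/(\<beta>-1)" using b1 by (simp add: field_simps)
lemma ct2: "1/(\<beta>*(\<beta>-1)) \<le> 1/(\<beta>-1)"
proof -
  have "1/(\<beta>*(\<beta>-1)) = (1/(\<beta>-1))/\<beta>" by simp
  also have "\<dots> \<le> 1/(\<beta>-1)" using b1 by (simp add: divide_le_eq)
  finally show ?thesis .
qed
lemma apos: "0 < 1/\<beta>" using b1 by simp

lemma qv_fst: "fst (qv d) = ind 1 d" and qv_snd: "snd (qv d) = ind 2 d"
  by (auto simp: qv_def ind_def)

lemma memS: "(x,y) \<in> S_beta \<beta> \<longleftrightarrow> 0 \<le> x \<and> 0 \<le> y \<and> x + y \<le> 1/(\<beta>-1)"
  by (simp add: S_beta_def)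
lemma memE0: "(x,y) \<in> E0 \<beta> \<longleftrightarrow> (x,y) \<in> S_beta \<beta> \<and> x < 1/\<beta> \<and> y < 1/\<beta>"
  by (auto simp: E0_def S_beta_def)
lemma memE1: "(x,y) \<in> E1 \<beta> \<longleftrightarrow> (x,y) \<in> S_beta \<beta> \<and> y < 1/\<beta> \<and> 1/(\<beta>*(\<beta>-1)) < x + y"
  by (auto simp: E1_def S_beta_def)
lemma memE2: "(x,y) \<in> E2 \<beta> \<longleftrightarrow> (x,y) \<in> S_beta \<beta> \<and> x < 1/\<beta> \<and> 1/(\<beta>*(\<beta>-1)) < x + y"
  by (auto simp: E2_def S_beta_def)
lemma memC01: "(x,y) \<in> C01 \<beta> \<longleftrightarrow> (x,y) \<in> S_beta \<beta> \<and> 1/\<beta> \<le> x \<and> y < 1/\<beta> \<and> x + y \<le> 1/(\<beta>*(\<beta>-1))"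
  by (auto simp: C01_def S_beta_def)
lemma memC12: "(x,y) \<in> C12 \<beta> \<longleftrightarrow> (x,y) \<in> S_beta \<beta> \<and> 1/\<beta> \<le> x \<and> 1/\<beta> \<le> y \<and> 1/(\<beta>*(\<beta>-1)) < x + y"
  by (auto simp: C12_def S_beta_def)
lemma memC02: "(x,y) \<in> C02 \<beta> \<longleftrightarrow> (x,y) \<in> S_beta \<beta> \<and> x < 1/\<beta> \<and> 1/\<beta> \<le> y \<and> x + y \<le> 1/(\<beta>*(\<beta>-1))"
  by (auto simp: C02_def S_beta_def)
lemma memC012: "(x,y) \<in> C012 \<beta> \<longleftrightarrow> (x,y) \<in> S_beta \<beta> \<and> 1/\<beta> \<le> x \<and> 1/\<beta> \<le> y \<and> x + y \<le> 1/(\<beta>*(\<beta>-1))"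
  by (auto simp: C012_def S_beta_def)

lemmas mems = memS memE0 memE1 memE2 memC01 memC12 memC02 memC012

lemma regions_disj:
  "z \<in> Cset \<beta> \<Longrightarrow> z \<notin> E0 \<beta> \<and> z \<notin> E1 \<beta> \<and> z \<notin> E2 \<beta>"
  "z \<in> C012 \<beta> \<Longrightarrow> z \<notin> E0 \<beta> \<and> z \<notin> E1 \<beta> \<and> z \<notin> E2 \<beta> \<and> z \<notin> Cset \<beta>"
  "z \<in> C01 \<beta> \<Longrightarrow> z \<notin> C12 \<beta>"
  by (cases z; auto simp: mems Cset_def)+

lemma coverage: "z \<in> S_beta \<beta> \<Longrightarrow> z \<in> E0 \<beta> \<or> z \<in> E1 \<beta> \<or> z \<in> E2 \<beta> \<or> z \<in> Cset \<beta> \<or> z \<in> C012 \<beta>"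
  by (cases z) (auto simp: mems Cset_def not_less)

lemma DF:
  assumes zS: "z \<in> S_beta \<beta>" and w: "\<omega> 0 \<in> {0,1}" and u: "\<upsilon> 0 \<in> {0,1,2}"
  defines "d \<equiv> dig \<beta> (\<omega>, \<upsilon>, z)"
  shows "(d = 0 \<and> fst z + snd z \<le> 1/(\<beta>*(\<beta>-1))) \<or> (d = 1 \<and> 1/\<beta> \<le> fst z) \<or> (d = 2 \<and> 1/\<beta> \<le> snd z)"
proof -
  obtain x y where z: "z = (x,y)" by (cases z)
  have k: "2/\<beta> \<le> 1/(\<beta>*(\<beta>-1))" by (rule key2)
  have cov: "z \<in> E0 \<beta> \<or> z \<in> E1 \<beta> \<or> z \<in> E2 \<beta> \<or> z \<in> Cset \<beta> \<or> z \<in> C012 \<beta>" using coverage zS by blast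
  show ?thesis
  proof (cases "z \<in> E0 \<beta>")
    case True
    hence "x < 1/\<beta>" "y < 1/\<beta>" by (auto simp: z mems)
    moreover have "d = 0" using True by (simp add: d_def dig_def)
    ultimately show ?thesis using k z by (simp add: field_simps)
  next
    case n0: False
    show ?thesis
    proof (cases "z \<in> E1 \<beta>")
      case True
      hence "y < 1/\<beta>" "1/(\<beta>*(\<beta>-1)) < x + y" by (auto simp: z mems)
      moreover have "d = 1" using True n0 by (simp add: d_def dig_def)
      ultimately show ?thesis using k z by (simp add: field_simps)
    next
      case n1: False
      show ?thesis
      proof (cases "z \<in> E2 \<beta>")
        case True
        hence "x < 1/\<beta>" "1/(\<beta>*(\<beta>-1)) < x + y" by (auto simp: z mems)
        moreover have "d = 2" using True n0 n1 by (simp add: d_def dig_def)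
        ultimately show ?thesis using k z by (simp add: field_simps)
      next
        case n2: False
        show ?thesis
        proof (cases "z \<in> C01 \<beta>")
          case True
          hence "1/\<beta> \<le> x" "x + y \<le> 1/(\<beta>*(\<beta>-1))" by (auto simp: z mems)
          moreover have "d = (if \<omega> 0 = 0 then 0 else 1)" using True n0 n1 n2 by (simp add: d_def dig_def)
          ultimately show ?thesis using z by auto
        next
          case n3: False
          show ?thesis
          proof (cases "z \<in> C12 \<beta>")
            case True
            hence "1/\<beta> \<le> x" "1/\<beta> \<le> y" by (auto simp: z mems)
            moreover have "d = (if \<omega> 0 = 0 then 1 else 2)" using True n0 n1 n2 n3 by (simp add: d_def dig_def)
            ultimately show ?thesis using z by auto
          next
            case n4: False
            show ?thesis
            proof (cases "z \<in> C02 \<beta>")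
              case True
              hence "1/\<beta> \<le> y" "x + y \<le> 1/(\<beta>*(\<beta>-1))" by (auto simp: z mems)
              moreover have "d = (if \<omega> 0 = 0 then 0 else 2)" using True n0 n1 n2 n3 n4 by (simp add: d_def dig_def)
              ultimately show ?thesis using z by auto
            next
              case n5: False
              hence C: "z \<in> C012 \<beta>" using cov n0 n1 n2 n3 n4 by (auto simp: Cset_def)
              hence "1/\<beta> \<le> x" "1/\<beta> \<le> y" "x + y \<le> 1/(\<beta>*(\<beta>-1))" by (auto simp: z mems)
              moreover have "d = \<upsilon> 0" using C n0 n1 n2 n3 n4 n5 by (simp add: d_def dig_def)
              ultimately show ?thesis using z u by auto
            qed
          qed
        qed
      qed
    qed
  qed
qed

lemma INV:
  assumes zS: "z \<in> S_beta \<beta>" and w: "\<omega> 0 \<in> {0,1}" and u: "\<upsilon> 0 \<in> {0,1,2}"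
  defines "d \<equiv> dig \<beta> (\<omega>, \<upsilon>, z)"
  shows "(\<beta> * fst z - fst (qv d), \<beta> * snd z - snd (qv d)) \<in> S_beta \<beta>"
proof -
  obtain x y where z: "z = (x,y)" by (cases z)
  have xy: "0 \<le> x" "0 \<le> y" "x + y \<le> 1/(\<beta>-1)" using zS z by (auto simp: mems)
  have D: "(d = 0 \<and> x + y \<le> 1/(\<beta>*(\<beta>-1))) \<or> (d = 1 \<and> 1/\<beta> \<le> x) \<or> (d = 2 \<and> 1/\<beta> \<le> y)"
    using DF[of z \<omega> \<upsilon>, OF zS w u] z d_def by simp
  have bp: "0 < \<beta>" using b1 by simp
  have m: "\<beta> * (x + y) \<le> \<beta> * (1/(\<beta>-1))" using xy bp by (intro mult_left_mono) auto
  have m2: "\<beta> * (x+y) \<le> \<beta> * (1/(\<beta>*(\<beta>-1)))" if "x + y \<le> 1/(\<beta>*(\<beta>-1))" using that bp by (intro mult_left_mono) auto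
  have bx: "\<beta> * x \<ge> 1" if "1/\<beta> \<le> x" using that bp by (simp add: field_simps)
  have by': "\<beta> * y \<ge> 1" if "1/\<beta> \<le> y" using that bp by (simp add: field_simps)
  from D show ?thesis
  proof (elim disjE conjE)
    assume "d = 0" "x + y \<le> 1/(\<beta>*(\<beta>-1))"
    thus ?thesis using m2 ct xy bp by (simp add: z memS qv_def algebra_simps)
  next
    assume "d = 1" "1/\<beta> \<le> x"
    thus ?thesis using m tt xy bp bx by (simp add: z memS qv_def algebra_simps)
  next
    assume "d = 2" "1/\<beta> \<le> y"
    thus ?thesis using m tt xy bp by' by (simp add: z memS qv_def algebra_simps)
  qed
qed

lemma R1: "b 0 = 1 \<Longrightarrow> 1/\<beta> \<le> fst (zeta b)"
  using zx_step[of b] zx_bounds(1)[of "sshift b"] b1 by (simp add: zeta_def ind_def divide_right_mono)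
lemma R2: "b 0 = 2 \<Longrightarrow> 1/\<beta> \<le> snd (zeta b)"
  using zy_step[of b] zy_bounds(1)[of "sshift b"] b1 by (simp add: zeta_def ind_def divide_right_mono)
lemma R0: "b 0 \<noteq> 1 \<Longrightarrow> b 0 \<noteq> 2 \<Longrightarrow> fst (zeta b) + snd (zeta b) \<le> 1/(\<beta>*(\<beta>-1))"
proof -
  assume "b 0 \<noteq> 1" "b 0 \<noteq> 2"
  hence "fst (zeta b) + snd (zeta b) = (zx (sshift b) + zy (sshift b))/\<beta>"
    using zx_step[of b] zy_step[of b] by (simp add: zeta_def ind_def add_divide_distrib)
  also have "\<dots> \<le> (1/(\<beta>-1))/\<beta>" using zsum_le b1 by (intro divide_right_mono) auto
  also have "\<dots> = 1/(\<beta>*(\<beta>-1))" by (simp add: mult.commute)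
  finally show ?thesis .
qed

definition dec :: "real \<times> real \<Rightarrow> nat \<Rightarrow> nat" where
  "dec z d = (if d = 0 \<or> (z \<in> C12 \<beta> \<and> d = 1) then 0 else 1)"

lemma VAL:
  assumes b: "b 0 \<in> {0,1,2}"
    and w: "zeta b \<in> Cset \<beta> \<Longrightarrow> \<omega> 0 = dec (zeta b) (b 0)"
    and u: "zeta b \<in> C012 \<beta> \<Longrightarrow> \<upsilon> 0 = b 0"
  shows "dig \<beta> (\<omega>, \<upsilon>, zeta b) = b 0"
proof -
  obtain x y where z: "zeta b = (x,y)" by (cases "zeta b")
  have r1: "b 0 = 1 \<Longrightarrow> 1/\<beta> \<le> x" using R1[of b] z by auto
  have r2: "b 0 = 2 \<Longrightarrow> 1/\<beta> \<le> y" using R2[of b] z by auto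
  have r0: "b 0 = 0 \<Longrightarrow> x + y \<le> 1/(\<beta>*(\<beta>-1))" using R0[of b] z by auto
  have cov: "zeta b \<in> E0 \<beta> \<or> zeta b \<in> E1 \<beta> \<or> zeta b \<in> E2 \<beta> \<or> zeta b \<in> Cset \<beta> \<or> zeta b \<in> C012 \<beta>"
    using coverage zeta_S by blast
  show ?thesis
  proof (cases "zeta b \<in> E0 \<beta>")
    case True
    hence "x < 1/\<beta>" "y < 1/\<beta>" by (auto simp: z mems)
    hence "b 0 = 0" using r1 r2 b by auto
    thus ?thesis using True by (simp add: dig_def)
  next
    case n0: False
    show ?thesis
    proof (cases "zeta b \<in> E1 \<beta>")
      case True
      hence "y < 1/\<beta>" "1/(\<beta>*(\<beta>-1)) < x + y" by (auto simp: z mems)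
      hence "b 0 = 1" using r0 r2 b by auto
      thus ?thesis using True n0 by (simp add: dig_def)
    next
      case n1: False
      show ?thesis
      proof (cases "zeta b \<in> E2 \<beta>")
        case True
        hence "x < 1/\<beta>" "1/(\<beta>*(\<beta>-1)) < x + y" by (auto simp: z mems)
        hence "b 0 = 2" using r0 r1 b by auto
        thus ?thesis using True n0 n1 by (simp add: dig_def)
      next
        case n2: False
        show ?thesis
        proof (cases "zeta b \<in> C01 \<beta>")
          case True
          hence "y < 1/\<beta>" "zeta b \<notin> C12 \<beta>" using regions_disj(3) by (auto simp: z mems)
          hence "b 0 \<in> {0,1}" "\<omega> 0 = dec (zeta b) (b 0)" using r2 b w True by (auto simp: Cset_def)
          thus ?thesis using True n0 n1 n2 \<open>zeta b \<notin> C12 \<beta>\<close> by (auto simp: dig_def dec_def)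
        next
          case n3: False
          show ?thesis
          proof (cases "zeta b \<in> C12 \<beta>")
            case True
            hence "1/(\<beta>*(\<beta>-1)) < x + y" by (auto simp: z mems)
            hence "b 0 \<in> {1,2}" "\<omega> 0 = dec (zeta b) (b 0)" using r0 b w True by (auto simp: Cset_def)
            thus ?thesis using True n0 n1 n2 n3 by (auto simp: dig_def dec_def)
          next
            case n4: False
            show ?thesis
            proof (cases "zeta b \<in> C02 \<beta>")
              case True
              hence "x < 1/\<beta>" by (auto simp: z mems)
              hence "b 0 \<in> {0,2}" "\<omega> 0 = dec (zeta b) (b 0)" using r1 b w True by (auto simp: Cset_def)
              thus ?thesis using True n0 n1 n2 n3 n4 by (auto simp: dig_def dec_def)
            next
              case n5: False
              hence C: "zeta b \<in> C012 \<beta>" using cov n0 n1 n2 n3 n4 by (auto simp: Cset_def)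
              thus ?thesis using u n0 n1 n2 n3 n4 n5 by (simp add: dig_def)
            qed
          qed
        qed
      qed
    qed
  qed
qed

lemma DEC:
  assumes "z \<in> Cset \<beta>" "\<omega> 0 \<in> {0,1}"
  shows "dec z (dig \<beta> (\<omega>, \<upsilon>, z)) = \<omega> 0"
  using assms regions_disj(1,3)[of z] by (auto simp: dig_def dec_def Cset_def)

lemma UPS:
  assumes "z \<in> C012 \<beta>"
  shows "dig \<beta> (\<omega>, \<upsilon>, z) = \<upsilon> 0"
  using assms regions_disj(2)[of z] by (auto simp: dig_def Cset_def)

end

definition cnt :: "nat set \<Rightarrow> nat \<Rightarrow> nat" where "cnt V n = card ({..<n} \<inter> V)"
definition exsel :: "nat set \<Rightarrow> (nat \<Rightarrow> bool) \<Rightarrow> nat \<Rightarrow> bool" where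
  "exsel V P k \<longleftrightarrow> (\<exists>n. n \<in> V \<and> cnt V n = k \<and> P n)"

lemma cnt_0[simp]: "cnt V 0 = 0" by (simp add: cnt_def)
lemma cnt_Suc: "cnt V (Suc n) = cnt V n + (if n \<in> V then 1 else 0)"
  by (simp add: cnt_def lessThan_Suc)

lemma cnt_mono_strict: "n \<in> V \<Longrightarrow> n < n' \<Longrightarrow> cnt V n < cnt V n'"
  unfolding cnt_def by (rule psubset_card_mono) auto

lemma cnt_uniq: assumes "n \<in> V" "n' \<in> V" "cnt V n = cnt V n'" shows "n = n'"
proof (rule ccontr)
  assume "n \<noteq> n'"
  then consider "n < n'" | "n' < n" by linarith
  thus False
  proof cases
    case 1 thus False using cnt_mono_strict[OF assms(1) 1] assms(3) by simp
  next
    case 2 thus False using cnt_mono_strict[OF assms(2) 2] assms(3) by simp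
  qed
qed

lemma cnt_shift: "cnt V (Suc n) = cnt {m. Suc m \<in> V} n + (if 0 \<in> V then 1 else 0)"
proof (induction n)
  case 0 thus ?case by (simp add: cnt_Suc)
next
  case (Suc n)
  show ?case using Suc by (subst cnt_Suc) (simp add: cnt_Suc)
qed

lemma exsel_unique: assumes "n \<in> V" "cnt V n = k" shows "exsel V P k = P n"
proof
  assume "exsel V P k"
  then obtain m where m: "m \<in> V" "cnt V m = k" "P m" by (auto simp: exsel_def)
  have "m = n" using cnt_uniq[OF m(1) assms(1)] m(2) assms(2) by simp
  thus "P n" using m by simp
next
  assume "P n" thus "exsel V P k" using assms by (auto simp: exsel_def)
qed

lemma exsel_shift: "exsel {m. Suc m \<in> V} (\<lambda>n. P (Suc n)) k = exsel V P (k + (if 0 \<in> V then 1 else 0))"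
proof
  assume "exsel {m. Suc m \<in> V} (\<lambda>n. P (Suc n)) k"
  then obtain n where "Suc n \<in> V" "cnt {m. Suc m \<in> V} n = k" "P (Suc n)" by (auto simp: exsel_def)
  thus "exsel V P (k + (if 0 \<in> V then 1 else 0))" unfolding exsel_def using cnt_shift[of V n] by (intro exI[of _ "Suc n"]) simp
next
  assume "exsel V P (k + (if 0 \<in> V then 1 else 0))"
  then obtain n where n: "n \<in> V" "cnt V n = k + (if 0 \<in> V then 1 else 0)" "P n" by (auto simp: exsel_def)
  show "exsel {m. Suc m \<in> V} (\<lambda>n. P (Suc n)) k"
  proof (cases n)
    case 0 thus ?thesis using n by auto
  next
    case (Suc m)
    thus ?thesis using n cnt_shift[of V m] unfolding exsel_def by auto
  qed
qed

lemma cnt_exists: assumes "infinite V" shows "\<exists>n\<in>V. cnt V n = k"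
proof (induction k)
  case 0
  have ne: "\<exists>x. x \<in> V" using assms by (metis finite.emptyI ex_in_conv)
  define n where "n = (LEAST n. n \<in> V)"
  have nV: "n \<in> V" unfolding n_def using ne by (rule LeastI_ex)
  have "\<And>m. m < n \<Longrightarrow> m \<notin> V" unfolding n_def by (rule not_less_Least)
  hence "{..<n} \<inter> V = {}" by blast
  hence "cnt V n = 0" by (simp add: cnt_def)
  thus ?case using nV by blast
next
  case (Suc k)
  then obtain n where n: "n \<in> V" "cnt V n = k" by blast
  have ex: "\<exists>m. m \<in> V \<and> n < m" using assms unfolding infinite_nat_iff_unbounded by blast
  define n' where "n' = (LEAST m. m \<in> V \<and> n < m)"
  have n': "n' \<in> V \<and> n < n'" unfolding n'_def using ex by (rule LeastI_ex)
  have le': "\<And>j. j \<in> V \<and> n < j \<Longrightarrow> n' \<le> j" unfolding n'_def by (rule Least_le)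
  have "{..<n'} \<inter> V = insert n ({..<n} \<inter> V)"
  proof (intro equalityI subsetI)
    fix j assume "j \<in> {..<n'} \<inter> V"
    hence j: "j < n'" "j \<in> V" by auto
    hence "\<not> n < j" using le'[of j] by linarith
    thus "j \<in> insert n ({..<n} \<inter> V)" using j by auto
  next
    fix j assume "j \<in> insert n ({..<n} \<inter> V)" thus "j \<in> {..<n'} \<inter> V" using n n' by auto
  qed
  hence "cnt V n' = Suc k" using n by (simp add: cnt_def)
  thus ?case using n' by blast
qed

lemma shiftn: "(sshift ^^ n) b i = b (i + n)"
  by (induction n arbitrary: i) (auto simp: sshift_def)
lemma shiftn_Suc: "(sshift ^^ n) (sshift b) = (sshift ^^ Suc n) b"
  by (simp add: funpow_Suc_right del: funpow.simps)

lemma sshift_app: "sshift f x = f (Suc x)" by (simp add: sshift_def)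

definition Yset :: "(nat \<Rightarrow> nat) set" where "Yset = {b. \<forall>n. b n \<in> {0,1,2}}"
lemma Y_shift: "b \<in> Yset \<Longrightarrow> sshift b \<in> Yset" by (auto simp: Yset_def sshift_def)
lemma Y_shiftn: "b \<in> Yset \<Longrightarrow> (sshift^^n) b \<in> Yset" by (auto simp: Yset_def shiftn)


context bset begin

definition zz :: "(nat \<Rightarrow> nat) \<Rightarrow> nat \<Rightarrow> real \<times> real" where "zz b n = zeta ((sshift ^^ n) b)"
definition VC :: "(nat \<Rightarrow> nat) \<Rightarrow> nat set" where "VC b = {n. zz b n \<in> Cset \<beta>}"
definition V3 :: "(nat \<Rightarrow> nat) \<Rightarrow> nat set" where "V3 b = {n. zz b n \<in> C012 \<beta>}"

definition omg :: "(nat \<Rightarrow> nat) \<Rightarrow> nat \<Rightarrow> nat" where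
  "omg b k = (if exsel (VC b) (\<lambda>n. dec (zz b n) (b n) = 1) k then 1 else 0)"
definition ups :: "(nat \<Rightarrow> nat) \<Rightarrow> nat \<Rightarrow> nat" where
  "ups b k = (if exsel (V3 b) (\<lambda>n. b n = 1) k then 1 else if exsel (V3 b) (\<lambda>n. b n = 2) k then 2 else 0)"
definition inv :: "(nat \<Rightarrow> nat) \<Rightarrow> point" where "inv b = (omg b, ups b, zeta b)"

lemma zz_0[simp]: "zz b 0 = zeta b" by (simp add: zz_def)
lemma zz_shift: "zz (sshift b) n = zz b (Suc n)" by (simp add: zz_def shiftn_Suc del: funpow.simps)
lemma VC_shift: "VC (sshift b) = {m. Suc m \<in> VC b}" by (simp add: VC_def zz_shift)
lemma V3_shift: "V3 (sshift b) = {m. Suc m \<in> V3 b}" by (simp add: V3_def zz_shift)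

lemma omg_shift: "omg (sshift b) k = omg b (k + (if 0 \<in> VC b then 1 else 0))"
  unfolding omg_def VC_shift
  using exsel_shift[of "VC b" "\<lambda>n. dec (zz b n) (b n) = 1" k]
  by (simp add: zz_shift sshift_app)

lemma ups_shift: "ups (sshift b) k = ups b (k + (if 0 \<in> V3 b then 1 else 0))"
  unfolding ups_def V3_shift
  using exsel_shift[of "V3 b" "\<lambda>n. b n = 1" k] exsel_shift[of "V3 b" "\<lambda>n. b n = 2" k]
  by (simp add: sshift_app)

lemma dec_01: "dec z d \<in> {0,1}" by (simp add: dec_def)

lemma omg_0: "zeta b \<in> Cset \<beta> \<Longrightarrow> omg b 0 = dec (zeta b) (b 0)"
  unfolding omg_def using exsel_unique[of 0 "VC b" 0] dec_01[of "zeta b" "b 0"]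
  by (auto simp: VC_def)

lemma ups_0: "b \<in> Yset \<Longrightarrow> zeta b \<in> C012 \<beta> \<Longrightarrow> ups b 0 = b 0"
  unfolding ups_def using exsel_unique[of 0 "V3 b" 0]
  by (auto simp: V3_def Yset_def)

lemma dig_inv: "b \<in> Yset \<Longrightarrow> dig \<beta> (inv b) = b 0"
  unfolding inv_def by (rule VAL) (auto simp: Yset_def omg_0 ups_0)

lemma K_inv: assumes "b \<in> Yset" shows "K \<beta> (inv b) = inv (sshift b)"
proof -
  have d: "dig \<beta> (inv b) = b 0" by (rule dig_inv[OF assms])
  have "0 \<in> VC b \<longleftrightarrow> zeta b \<in> Cset \<beta>" "0 \<in> V3 b \<longleftrightarrow> zeta b \<in> C012 \<beta>" by (auto simp: VC_def V3_def)
  hence o: "omg (sshift b) = (if zeta b \<in> Cset \<beta> then sshift (omg b) else omg b)"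
    and u: "ups (sshift b) = (if zeta b \<in> C012 \<beta> then sshift (ups b) else ups b)"
    by (auto simp: fun_eq_iff omg_shift ups_shift sshift_app)
  show ?thesis
    using d regions_disj(1,2)[of "zeta b"] unfolding K_def
    by (auto simp: inv_def o u zeta_shift[of b])
qed

lemma Kpow_inv: "b \<in> Yset \<Longrightarrow> (K \<beta> ^^ n) (inv b) = inv ((sshift ^^ n) b)"
  by (induction n) (auto simp: K_inv Y_shiftn)

lemma phi_inv: "b \<in> Yset \<Longrightarrow> phi \<beta> (inv b) = b"
  unfolding phi_def by (auto simp: fun_eq_iff Kpow_inv dig_inv Y_shiftn shiftn)

end

context bset begin

lemma spaceX: "space (X_M \<beta>) = {p. (\<forall>i. fst p i \<in> {0,1}) \<and> (\<forall>i. fst (snd p) i \<in> {0,1,2}) \<and> snd (snd p) \<in> S_beta \<beta>}"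
  unfolding X_M_def Omega_M_def Ups_M_def
  by (simp add: space_pair_measure space_PiM space_restrict_space PiE_UNIV_domain Pi_iff mem_Times_iff set_eq_iff)

lemma spaceP: "space P_M = Yset"
  unfolding P_M_def by (simp add: space_PiM PiE_UNIV_domain space_uniform_count_measure Yset_def Pi_iff set_eq_iff)

lemma inv_space: "b \<in> Yset \<Longrightarrow> inv b \<in> space (X_M \<beta>)"
  unfolding spaceX inv_def by (auto simp: omg_def ups_def zeta_S)

lemma K_space: assumes "p \<in> space (X_M \<beta>)" shows "K \<beta> p \<in> space (X_M \<beta>)"
proof -
  obtain \<omega> \<upsilon> z where p: "p = (\<omega>, \<upsilon>, z)" by (cases p) auto
  have h: "\<forall>i. \<omega> i \<in> {0,1}" "\<forall>i. \<upsilon> i \<in> {0,1,2}" "z \<in> S_beta \<beta>" using assms by (auto simp: spaceX p)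
  have "(\<beta> * fst z - fst (qv (dig \<beta> (\<omega>, \<upsilon>, z))), \<beta> * snd z - snd (qv (dig \<beta> (\<omega>, \<upsilon>, z)))) \<in> S_beta \<beta>"
    using h by (intro INV) auto
  thus ?thesis using h unfolding spaceX K_def p by (auto simp: sshift_app)
qed

lemma Kpow_space: "p \<in> space (X_M \<beta>) \<Longrightarrow> (K \<beta> ^^ n) p \<in> space (X_M \<beta>)"
  by (induction n) (auto simp: K_space)

lemma dig_cases: "dig \<beta> (\<omega>, \<upsilon>, z) \<in> {0,1,2} \<or> dig \<beta> (\<omega>, \<upsilon>, z) = \<upsilon> 0"
  by (simp add: dig_def)

lemma dig_Y: assumes "p \<in> space (X_M \<beta>)" shows "dig \<beta> p \<in> {0,1,2}"
proof -
  obtain \<omega> \<upsilon> z where p: "p = (\<omega>, \<upsilon>, z)" by (cases p) auto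
  have "\<upsilon> 0 \<in> {0,1,2}" using assms by (simp add: spaceX p)
  thus ?thesis using dig_cases[of \<omega> \<upsilon> z] p by auto
qed

lemma phi_Y: "p \<in> space (X_M \<beta>) \<Longrightarrow> phi \<beta> p \<in> Yset"
  unfolding phi_def Yset_def using dig_Y Kpow_space by auto

lemma small: assumes "\<And>n. \<bar>\<beta>^n * D\<bar> \<le> B" shows "D = 0"
proof (rule ccontr)
  assume "D \<noteq> 0"
  hence Dp: "0 < \<bar>D\<bar>" by simp
  obtain n where n: "B / \<bar>D\<bar> < \<beta>^n" using real_arch_pow[OF b1] by blast
  hence "B < \<beta>^n * \<bar>D\<bar>" using Dp by (simp add: divide_less_eq)
  also have "\<dots> = \<bar>\<beta>^n * D\<bar>" using b1 by (simp add: abs_mult)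
  finally show False using assms[of n] by simp
qed

lemma K_comp: "K \<beta> (\<omega>, \<upsilon>, z) =
   (if z \<notin> E0 \<beta> \<union> E1 \<beta> \<union> E2 \<beta> \<and> z \<in> Cset \<beta> then sshift \<omega> else \<omega>,
    if z \<notin> E0 \<beta> \<union> E1 \<beta> \<union> E2 \<beta> \<union> Cset \<beta> \<and> z \<in> C012 \<beta> then sshift \<upsilon> else \<upsilon>,
    (\<beta> * fst z - ind 1 (dig \<beta> (\<omega>, \<upsilon>, z)), \<beta> * snd z - ind 2 (dig \<beta> (\<omega>, \<upsilon>, z))))"
  unfolding K_def by (simp add: qv_fst qv_snd)

lemma zpart: assumes p: "p \<in> space (X_M \<beta>)"
  shows "snd (snd ((K \<beta> ^^ n) p)) = zz (phi \<beta> p) n"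
proof -
  define b where "b = phi \<beta> p"
  define q where "q n = snd (snd ((K \<beta> ^^ n) p))" for n
  have bn: "b n = dig \<beta> ((K \<beta> ^^ n) p)" for n by (simp add: b_def phi_def)
  have qS: "q n \<in> S_beta \<beta>" for n using Kpow_space[OF p, of n] by (simp add: q_def spaceX)
  have q_step: "q (Suc n) = (\<beta> * fst (q n) - ind 1 (b n), \<beta> * snd (q n) - ind 2 (b n))" for n
  proof -
    obtain \<omega> \<upsilon> z where e: "(K \<beta> ^^ n) p = (\<omega>, \<upsilon>, z)" by (cases "(K \<beta> ^^ n) p") auto
    show ?thesis by (simp add: q_def e K_comp bn)
  qed
  have z_step: "zz b (Suc n) = (\<beta> * fst (zz b n) - ind 1 (b n), \<beta> * snd (zz b n) - ind 2 (b n))" for n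
    unfolding zz_def using zeta_shift[of "(sshift ^^ n) b"] by (simp add: shiftn qv_fst qv_snd)
  have s1: "fst (q (Suc n)) - fst (zz b (Suc n)) = \<beta> * (fst (q n) - fst (zz b n))" for n
    by (simp add: q_step z_step algebra_simps)
  have s2: "snd (q (Suc n)) - snd (zz b (Suc n)) = \<beta> * (snd (q n) - snd (zz b n))" for n
    by (simp add: q_step z_step algebra_simps)
  have d1: "fst (q n) - fst (zz b n) = \<beta>^n * (fst (q 0) - fst (zz b 0))" for n
    by (induction n) (simp_all add: s1 del: zz_0)
  have d2: "snd (q n) - snd (zz b n) = \<beta>^n * (snd (q 0) - snd (zz b 0))" for n
    by (induction n) (simp_all add: s2 del: zz_0)
  have zS: "zz b n \<in> S_beta \<beta>" for n by (simp add: zz_def zeta_S)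
  have "\<bar>\<beta>^n * (fst (q 0) - fst (zz b 0))\<bar> \<le> 1/(\<beta>-1)" for n
  proof -
    obtain x y where "q n = (x,y)" by (cases "q n")
    moreover obtain x' y' where "zz b n = (x',y')" by (cases "zz b n")
    ultimately show ?thesis using qS[of n] zS[of n] d1[of n] by (auto simp: memS)
  qed
  hence D1: "fst (q 0) - fst (zz b 0) = 0" by (rule small)
  have "\<bar>\<beta>^n * (snd (q 0) - snd (zz b 0))\<bar> \<le> 1/(\<beta>-1)" for n
  proof -
    obtain x y where "q n = (x,y)" by (cases "q n")
    moreover obtain x' y' where "zz b n = (x',y')" by (cases "zz b n")
    ultimately show ?thesis using qS[of n] zS[of n] d2[of n] by (auto simp: memS)
  qed
  hence D2: "snd (q 0) - snd (zz b 0) = 0" by (rule small)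
  show ?thesis using d1[of n] d2[of n] D1 D2 unfolding b_def[symmetric] q_def[symmetric]
    by (simp add: prod_eq_iff)
qed

lemma omega_part: assumes p: "p \<in> space (X_M \<beta>)"
  shows "fst ((K \<beta> ^^ n) p) = (sshift ^^ cnt (VC (phi \<beta> p)) n) (fst p)"
proof (induction n)
  case 0 thus ?case by simp
next
  case (Suc n)
  obtain \<omega> \<upsilon> z where e: "(K \<beta> ^^ n) p = (\<omega>, \<upsilon>, z)" by (cases "(K \<beta> ^^ n) p") auto
  have z: "z = zz (phi \<beta> p) n" using zpart[OF p, of n] e by simp
  have "n \<in> VC (phi \<beta> p) \<longleftrightarrow> z \<in> Cset \<beta>" by (simp add: VC_def z)
  thus ?case using Suc e regions_disj(1)[of z] by (auto simp: K_comp cnt_Suc)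
qed

lemma upsilon_part: assumes p: "p \<in> space (X_M \<beta>)"
  shows "fst (snd ((K \<beta> ^^ n) p)) = (sshift ^^ cnt (V3 (phi \<beta> p)) n) (fst (snd p))"
proof (induction n)
  case 0 thus ?case by simp
next
  case (Suc n)
  obtain \<omega> \<upsilon> z where e: "(K \<beta> ^^ n) p = (\<omega>, \<upsilon>, z)" by (cases "(K \<beta> ^^ n) p") auto
  have z: "z = zz (phi \<beta> p) n" using zpart[OF p, of n] e by simp
  have "n \<in> V3 (phi \<beta> p) \<longleftrightarrow> z \<in> C012 \<beta>" by (simp add: V3_def z)
  thus ?case using Suc e regions_disj(2)[of z] by (auto simp: K_comp cnt_Suc)
qed

definition G :: "(nat \<Rightarrow> nat) set" where "G = {b \<in> Yset. infinite (VC b) \<and> infinite (V3 b)}"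

lemma Z_char: "Z \<beta> = {p \<in> space (X_M \<beta>). infinite (VC (phi \<beta> p)) \<and> infinite (V3 (phi \<beta> p))}"
  unfolding Z_def VC_def V3_def by (auto simp: zpart)

lemma inv_phi: assumes pZ: "p \<in> Z \<beta>" shows "inv (phi \<beta> p) = p"
proof -
  obtain \<omega> \<upsilon> z where p: "p = (\<omega>, \<upsilon>, z)" by (cases p) auto
  have sp: "p \<in> space (X_M \<beta>)" and iC: "infinite (VC (phi \<beta> p))" and i3: "infinite (V3 (phi \<beta> p))"
    using pZ by (auto simp: Z_char)
  define b where "b = phi \<beta> p"
  have h: "\<forall>i. \<omega> i \<in> {0,1}" "\<forall>i. \<upsilon> i \<in> {0,1,2}" using sp by (auto simp: spaceX p)
  have bn: "b n = dig \<beta> ((K \<beta> ^^ n) p)" for n by (simp add: b_def phi_def)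
  have zb: "zeta b = z" using zpart[OF sp, of 0] by (simp add: p b_def)
  have om: "omg b k = \<omega> k" for k
  proof -
    obtain n where n: "n \<in> VC b" "cnt (VC b) n = k" using cnt_exists[OF iC] b_def by blast
    obtain \<omega>' \<upsilon>' z' where e: "(K \<beta> ^^ n) p = (\<omega>', \<upsilon>', z')" by (cases "(K \<beta> ^^ n) p") auto
    have z': "z' = zz b n" using zpart[OF sp, of n] e b_def by simp
    have w': "\<omega>' = (sshift ^^ k) \<omega>" using omega_part[OF sp, of n] e n b_def p by simp
    have "\<omega>' 0 = \<omega> k" by (simp add: w' shiftn)
    have "z' \<in> Cset \<beta>" using n z' by (simp add: VC_def)
    hence "dec z' (dig \<beta> (\<omega>', \<upsilon>', z')) = \<omega>' 0" using DEC h \<open>\<omega>' 0 = \<omega> k\<close> by auto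
    hence "dec (zz b n) (b n) = \<omega> k" using bn[of n] e z' \<open>\<omega>' 0 = \<omega> k\<close> by simp
    thus ?thesis unfolding omg_def using exsel_unique[OF n] h by auto
  qed
  have up: "ups b k = \<upsilon> k" for k
  proof -
    obtain n where n: "n \<in> V3 b" "cnt (V3 b) n = k" using cnt_exists[OF i3] b_def by blast
    obtain \<omega>' \<upsilon>' z' where e: "(K \<beta> ^^ n) p = (\<omega>', \<upsilon>', z')" by (cases "(K \<beta> ^^ n) p") auto
    have z': "z' = zz b n" using zpart[OF sp, of n] e b_def by simp
    have u': "\<upsilon>' = (sshift ^^ k) \<upsilon>" using upsilon_part[OF sp, of n] e n b_def p by simp
    have "z' \<in> C012 \<beta>" using n z' by (simp add: V3_def)
    hence "dig \<beta> (\<omega>', \<upsilon>', z') = \<upsilon>' 0" by (rule UPS)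
    hence "b n = \<upsilon> k" using bn[of n] e u' by (simp add: shiftn)
    thus ?thesis unfolding ups_def using exsel_unique[OF n] h by auto
  qed
  show ?thesis unfolding b_def[symmetric] inv_def using om up zb p by (auto simp: fun_eq_iff)
qed

lemma inv_Z: assumes "b \<in> G" shows "inv b \<in> Z \<beta>"
proof -
  have Y: "b \<in> Yset" using assms by (simp add: G_def)
  show ?thesis unfolding Z_char using assms inv_space[OF Y] phi_inv[OF Y] by (simp add: G_def)
qed

lemma phi_G: "p \<in> Z \<beta> \<Longrightarrow> phi \<beta> p \<in> G"
  unfolding G_def Z_char using phi_Y by auto

lemma phi_image: "phi \<beta> ` (Z \<beta> \<inter> A) = {b \<in> G. inv b \<in> A}"
proof (intro equalityI subsetI)
  fix b assume "b \<in> phi \<beta> ` (Z \<beta> \<inter> A)"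
  then obtain p where "p \<in> Z \<beta>" "p \<in> A" "b = phi \<beta> p" by auto
  thus "b \<in> {b \<in> G. inv b \<in> A}" using phi_G inv_phi by auto
next
  fix b assume "b \<in> {b \<in> G. inv b \<in> A}"
  hence "b \<in> G" "inv b \<in> A" by auto
  moreover have "phi \<beta> (inv b) = b" using \<open>b \<in> G\<close> phi_inv by (simp add: G_def)
  ultimately show "b \<in> phi \<beta> ` (Z \<beta> \<inter> A)" using inv_Z[OF \<open>b \<in> G\<close>] by (intro image_eqI[of _ _ "inv b"]) auto
qed

lemma bij_phi: "bij_betw (phi \<beta>) (Z \<beta>) G"
proof -
  have "inj_on (phi \<beta>) (Z \<beta>)" by (rule inj_onI) (metis inv_phi)
  moreover have "phi \<beta> ` Z \<beta> = G" using phi_image[of UNIV] by simp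
  ultimately show ?thesis by (simp add: bij_betw_def)
qed

lemma the_inv_phi: "b \<in> G \<Longrightarrow> the_inv_into (Z \<beta>) (phi \<beta>) b = inv b"
  using bij_phi inv_Z phi_inv by (intro the_inv_into_f_eq) (auto simp: bij_betw_def G_def)

lemma inf_shift: assumes "infinite S" shows "infinite {m::nat. Suc m \<in> S}"
  unfolding infinite_nat_iff_unbounded
proof
  fix m
  obtain n where "n > Suc m" "n \<in> S" using assms unfolding infinite_nat_iff_unbounded by blast
  thus "\<exists>n>m. n \<in> {m. Suc m \<in> S}" by (intro exI[of _ "n - 1"]) auto
qed

lemma G_shift: "b \<in> G \<Longrightarrow> sshift b \<in> G"
  unfolding G_def using Y_shift inf_shift by (auto simp: VC_shift V3_shift)

lemma Z_K: assumes pZ: "p \<in> Z \<beta>" shows "K \<beta> p \<in> Z \<beta>"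
proof -
  have e: "inv (phi \<beta> p) = p" by (rule inv_phi[OF pZ])
  have b: "phi \<beta> p \<in> G" by (rule phi_G[OF pZ])
  have Y: "phi \<beta> p \<in> Yset" using b by (simp add: G_def)
  have "K \<beta> (inv (phi \<beta> p)) = inv (sshift (phi \<beta> p))" by (rule K_inv[OF Y])
  hence "K \<beta> p = inv (sshift (phi \<beta> p))" by (simp only: e)
  thus ?thesis using inv_Z G_shift b by simp
qed

lemma phi_K: "phi \<beta> (K \<beta> p) = sshift (phi \<beta> p)"
  unfolding phi_def by (auto simp: fun_eq_iff sshift_app funpow_Suc_right simp del: funpow.simps)

end

abbreviation M3 :: "nat measure" where "M3 \<equiv> uniform_count_measure {0,1,2::nat}"

lemma prob_M3: "prob_space M3" by (rule prob_space_uniform_count_measure) auto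

lemma prob_P: "prob_space P_M"
  unfolding P_M_def by (rule prob_space_PiM) (rule prob_M3)

lemma P_iter: "distr (M3 \<Otimes>\<^sub>M P_M) P_M (\<lambda>(s, \<omega>). case_nat s \<omega>) = P_M"
proof -
  interpret U: prob_space M3 by (rule prob_M3)
  interpret SQ: sequence_space M3 by unfold_locales
  show ?thesis unfolding P_M_def by (rule SQ.PiM_iter)
qed

lemma cons_meas: "(\<lambda>(s, \<omega>). case_nat s \<omega>) \<in> measurable (M3 \<Otimes>\<^sub>M P_M) P_M"
  unfolding P_M_def by measurable

lemma coord_meas: "(\<lambda>b. b i) \<in> measurable P_M M3"
  unfolding P_M_def by (rule measurable_component_singleton) simp

lemma shift_meas: "sshift \<in> measurable P_M P_M"
proof -
  have "(\<lambda>\<omega> i. \<omega> (Suc i)) \<in> measurable P_M P_M"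
    unfolding P_M_def
    by (rule measurable_PiM_single') (auto simp: space_PiM PiE_UNIV_domain)
  thus ?thesis by (simp add: sshift_def[abs_def])
qed

lemma shiftn_meas: "(sshift ^^ n) \<in> measurable P_M P_M"
  by (induction n) (auto intro: measurable_compose[OF _ shift_meas])

lemma space_P_iff: "b \<in> space P_M \<longleftrightarrow> (\<forall>i. b i \<in> {0,1,2})"
  unfolding P_M_def by (simp add: space_PiM PiE_UNIV_domain space_uniform_count_measure Pi_iff)

lemma cons_space: "(s, \<omega>) \<in> space (M3 \<Otimes>\<^sub>M P_M) \<Longrightarrow> case_nat s \<omega> \<in> space P_M"
  by (auto simp: space_pair_measure space_P_iff space_uniform_count_measure split: nat.split)

lemma shift_inv: assumes A: "A \<in> sets P_M"
  shows "emeasure P_M (sshift -` A \<inter> space P_M) = emeasure P_M A"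
proof -
  interpret P: prob_space P_M by (rule prob_P)
  interpret U: prob_space M3 by (rule prob_M3)
  have s: "sshift -` A \<inter> space P_M \<in> sets P_M" using measurable_sets[OF shift_meas A] .
  have "emeasure P_M (sshift -` A \<inter> space P_M) = emeasure (distr (M3 \<Otimes>\<^sub>M P_M) P_M (\<lambda>(s, \<omega>). case_nat s \<omega>)) (sshift -` A \<inter> space P_M)"
    by (simp only: P_iter)
  also have "\<dots> = emeasure (M3 \<Otimes>\<^sub>M P_M) ((\<lambda>(s, \<omega>). case_nat s \<omega>) -` (sshift -` A \<inter> space P_M) \<inter> space (M3 \<Otimes>\<^sub>M P_M))"
    by (rule emeasure_distr[OF cons_meas s])
  also have "(\<lambda>(s, \<omega>). case_nat s \<omega>) -` (sshift -` A \<inter> space P_M) \<inter> space (M3 \<Otimes>\<^sub>M P_M) = space M3 \<times> A"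
    using cons_space sets.sets_into_space[OF A]
    by (auto simp: space_pair_measure sshift_def)
  also have "emeasure (M3 \<Otimes>\<^sub>M P_M) (space M3 \<times> A) = emeasure M3 (space M3) * emeasure P_M A"
    by (rule P.emeasure_pair_measure_Times[OF sets.top A])
  also have "\<dots> = emeasure P_M A" by (subst U.emeasure_space_1) simp
  finally show ?thesis .
qed

lemma shiftn_inv: assumes A: "A \<in> sets P_M"
  shows "emeasure P_M ((sshift ^^ n) -` A \<inter> space P_M) = emeasure P_M A"
proof (induction n)
  case 0 thus ?case using sets.sets_into_space[OF A] by (simp add: Int_absorb2)
next
  case (Suc n)
  have s: "(sshift ^^ n) -` A \<inter> space P_M \<in> sets P_M" using measurable_sets[OF shiftn_meas A] .
  have e: "(sshift ^^ Suc n) -` A \<inter> space P_M = sshift -` ((sshift ^^ n) -` A \<inter> space P_M) \<inter> space P_M"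
    using measurable_space[OF shift_meas] by (auto simp: funpow_Suc_right simp del: funpow.simps)
  show ?case by (simp only: e shift_inv[OF s] Suc.IH)
qed

lemma indep1: assumes F: "F \<in> sets P_M" and c: "c \<in> {0,1,2}"
  shows "emeasure P_M {b \<in> space P_M. b 0 = c \<and> sshift b \<in> F} = ennreal (1/3) * emeasure P_M F"
proof -
  interpret P: prob_space P_M by (rule prob_P)
  have s: "{b \<in> space P_M. b 0 = c \<and> sshift b \<in> F} = ((\<lambda>b. b 0) -` {c} \<inter> space P_M) \<inter> (sshift -` F \<inter> space P_M)"
    by auto
  have cM: "{c} \<in> sets M3" using c by (simp add: sets_uniform_count_measure)
  have sm: "{b \<in> space P_M. b 0 = c \<and> sshift b \<in> F} \<in> sets P_M"
    unfolding s using measurable_sets[OF coord_meas cM] measurable_sets[OF shift_meas F] by auto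
  have "emeasure P_M {b \<in> space P_M. b 0 = c \<and> sshift b \<in> F} = emeasure (distr (M3 \<Otimes>\<^sub>M P_M) P_M (\<lambda>(s, \<omega>). case_nat s \<omega>)) {b \<in> space P_M. b 0 = c \<and> sshift b \<in> F}"
    by (simp only: P_iter)
  also have "\<dots> = emeasure (M3 \<Otimes>\<^sub>M P_M) ((\<lambda>(s, \<omega>). case_nat s \<omega>) -` {b \<in> space P_M. b 0 = c \<and> sshift b \<in> F} \<inter> space (M3 \<Otimes>\<^sub>M P_M))"
    by (rule emeasure_distr[OF cons_meas sm])
  also have "(\<lambda>(s, \<omega>). case_nat s \<omega>) -` {b \<in> space P_M. b 0 = c \<and> sshift b \<in> F} \<inter> space (M3 \<Otimes>\<^sub>M P_M) = {c} \<times> F"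
    using cons_space sets.sets_into_space[OF F] c
    by (auto simp: space_pair_measure sshift_def space_uniform_count_measure)
  also have "emeasure (M3 \<Otimes>\<^sub>M P_M) ({c} \<times> F) = emeasure M3 {c} * emeasure P_M F"
    by (rule P.emeasure_pair_measure_Times[OF cM F])
  also have "emeasure M3 {c} = ennreal (1/3)"
    using c by (simp add: emeasure_uniform_count_measure divide_ennreal[symmetric] ennreal_of_nat_eq_real_of_nat)
  finally show ?thesis .
qed

definition occ :: "nat list \<Rightarrow> (nat \<Rightarrow> nat) \<Rightarrow> nat \<Rightarrow> bool" where
  "occ w b n \<longleftrightarrow> (\<forall>i<length w. b (n + i) = w ! i)"

lemma coord_set: "(\<lambda>b. b j) -` {c} \<inter> space P_M \<in> sets P_M"
proof -
  have "(\<lambda>b. b j) -` ({c} \<inter> {0,1,2}) \<inter> space P_M \<in> sets P_M"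
    by (rule measurable_sets[OF coord_meas]) (auto simp: sets_uniform_count_measure)
  moreover have "(\<lambda>b. b j) -` ({c} \<inter> {0,1,2}) \<inter> space P_M = (\<lambda>b. b j) -` {c} \<inter> space P_M"
    by (auto simp: space_P_iff)
  ultimately show ?thesis by simp
qed

lemma occ_Cons: "occ (c # w) b n \<longleftrightarrow> b n = c \<and> occ w b (Suc n)"
  unfolding occ_def by (auto simp: less_Suc_eq_0_disj)

lemma occ_shift: "occ w (sshift b) n \<longleftrightarrow> occ w b (Suc n)"
  unfolding occ_def by (simp add: sshift_def)

lemma occ_sets0: "{b \<in> space P_M. occ w b n} \<in> sets P_M"
proof (induction w arbitrary: n)
  case Nil thus ?case by (simp add: occ_def)
next
  case (Cons c w)
  have "{b \<in> space P_M. occ (c # w) b n} = ((\<lambda>b. b n) -` {c} \<inter> space P_M) \<inter> {b \<in> space P_M. occ w b (Suc n)}"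
    by (auto simp: occ_Cons)
  thus ?case using coord_set Cons.IH by auto
qed

lemma occ_sets: "{b \<in> space P_M. occ w b n \<and> (sshift ^^ m) b \<in> F} \<in> sets P_M" if F: "F \<in> sets P_M"
proof -
  have "{b \<in> space P_M. occ w b n \<and> (sshift ^^ m) b \<in> F} = {b \<in> space P_M. occ w b n} \<inter> ((sshift ^^ m) -` F \<inter> space P_M)"
    by auto
  thus ?thesis using occ_sets0 measurable_sets[OF shiftn_meas F] by auto
qed

lemma indepL: assumes F: "F \<in> sets P_M" and w: "set w \<subseteq> {0,1,2}"
  shows "emeasure P_M {b \<in> space P_M. occ w b 0 \<and> (sshift ^^ length w) b \<in> F} = ennreal ((1/3)^length w) * emeasure P_M F"
  using w
proof (induction w)
  case Nil
  have "{b \<in> space P_M. occ [] b 0 \<and> (sshift ^^ length []) b \<in> F} = F"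
    using sets.sets_into_space[OF F] by (auto simp: occ_def)
  thus ?case by simp
next
  case (Cons c w)
  define F' where "F' = {b \<in> space P_M. occ w b 0 \<and> (sshift ^^ length w) b \<in> F}"
  have F': "F' \<in> sets P_M" unfolding F'_def by (rule occ_sets[OF F])
  have "{b \<in> space P_M. occ (c # w) b 0 \<and> (sshift ^^ length (c # w)) b \<in> F} = {b \<in> space P_M. b 0 = c \<and> sshift b \<in> F'}"
    using measurable_space[OF shift_meas]
    by (auto simp: F'_def occ_Cons occ_shift funpow_Suc_right simp del: funpow.simps)
  also have "emeasure P_M \<dots> = ennreal (1/3) * emeasure P_M F'"
    using Cons.prems by (intro indep1 F') auto
  also have "emeasure P_M F' = ennreal ((1/3)^length w) * emeasure P_M F"
    unfolding F'_def using Cons by auto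
  finally have X: "emeasure P_M {b \<in> space P_M. occ (c # w) b 0 \<and> (sshift ^^ length (c # w)) b \<in> F} = ennreal (1/3) * (ennreal ((1/3)^length w) * emeasure P_M F)" .
  have "ennreal (1/3) * ennreal ((1/3)^length w) = ennreal ((1/3)^length (c#w))"
    by (subst ennreal_mult[symmetric]) auto
  thus ?case using X by (simp only: mult.assoc[symmetric])
qed


lemma occ_shiftn: "occ w ((sshift ^^ m) b) n \<longleftrightarrow> occ w b (n + m)"
  unfolding occ_def by (simp add: shiftn add.commute add.left_commute)

lemma pattern_AE: assumes w: "set w \<subseteq> {0,1,2}" "w \<noteq> []"
  shows "AE b in P_M. infinite {n. occ w b n}"
proof -
  interpret P: prob_space P_M by (rule prob_P)
  define L where "L = length w"
  have L0: "0 < L" using w by (simp add: L_def)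
  define E where "E = space P_M - (\<Union>j. {b \<in> space P_M. occ w b (j*L)})"
  have E: "E \<in> sets P_M" unfolding E_def using occ_sets0 by auto
  have sh: "(sshift ^^ L) b \<in> space P_M" if "b \<in> space P_M" for b
    using measurable_space[OF shiftn_meas] that by auto
  have Eeq: "E = {b \<in> space P_M. \<not> occ w b 0} \<inter> ((sshift ^^ L) -` E \<inter> space P_M)"
  proof (intro equalityI subsetI)
    fix b assume "b \<in> E"
    hence b: "b \<in> space P_M" "\<And>j. \<not> occ w b (j*L)" by (auto simp: E_def)
    have "\<not> occ w b (0*L)" using b(2) .
    moreover have "(sshift ^^ L) b \<in> E" using b sh[OF b(1)] b(2)[of "Suc _"]
      by (auto simp: E_def occ_shiftn add.commute)
    ultimately show "b \<in> {b \<in> space P_M. \<not> occ w b 0} \<inter> ((sshift ^^ L) -` E \<inter> space P_M)" using b by auto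
  next
    fix b assume "b \<in> {b \<in> space P_M. \<not> occ w b 0} \<inter> ((sshift ^^ L) -` E \<inter> space P_M)"
    hence b: "b \<in> space P_M" "\<not> occ w b 0" "\<And>j. \<not> occ w b (j*L + L)"
      by (auto simp: E_def occ_shiftn)
    have "\<not> occ w b (j*L)" for j
    proof (cases j)
      case 0 thus ?thesis using b by simp
    next
      case (Suc k) thus ?thesis using b(3)[of k] by (simp add: add.commute)
    qed
    thus "b \<in> E" using b by (auto simp: E_def)
  qed
  define A where "A = {b \<in> space P_M. occ w b 0 \<and> (sshift ^^ L) b \<in> E}"
  have A: "A \<in> sets P_M" unfolding A_def by (rule occ_sets[OF E])
  have U: "(sshift ^^ L) -` E \<inter> space P_M = E \<union> A"
    using Eeq by (auto simp: A_def)
  have disj: "E \<inter> A = {}" using Eeq by (auto simp: A_def)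
  have m1: "measure P_M ((sshift ^^ L) -` E \<inter> space P_M) = measure P_M E"
    using shiftn_inv[OF E, of L] by (simp add: measure_def)
  have m2: "measure P_M A = (1/3)^L * measure P_M E"
  proof -
    have "emeasure P_M A = ennreal ((1/3)^L) * emeasure P_M E"
      unfolding A_def L_def by (rule indepL[OF E w(1)])
    hence "measure P_M A = enn2real (ennreal ((1/3)^L) * emeasure P_M E)" by (simp add: measure_def)
    thus ?thesis by (simp add: enn2real_mult measure_def)
  qed
  have "measure P_M E = measure P_M E + (1/3)^L * measure P_M E"
    using m1 m2 U P.finite_measure_Union[OF E A disj] by simp
  hence "(1/3)^L * measure P_M E = 0" by simp
  hence mE: "measure P_M E = 0" by simp
  hence eE: "emeasure P_M E = 0" by (simp add: P.emeasure_eq_measure)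
  define N where "N m = (sshift ^^ m) -` E \<inter> space P_M" for m
  have Nnull: "N m \<in> null_sets P_M" for m
  proof -
    have "N m \<in> sets P_M" unfolding N_def using measurable_sets[OF shiftn_meas E] .
    moreover have "emeasure P_M (N m) = 0" unfolding N_def using shiftn_inv[OF E, of m] eE by simp
    ultimately show ?thesis by (simp add: null_sets_def)
  qed
  have "(\<Union>m. N m) \<in> null_sets P_M" using Nnull by (rule null_sets_UN)
  moreover have "{b \<in> space P_M. \<not> infinite {n. occ w b n}} \<subseteq> (\<Union>m. N m)"
  proof
    fix b assume "b \<in> {b \<in> space P_M. \<not> infinite {n. occ w b n}}"
    hence b: "b \<in> space P_M" "finite {n. occ w b n}" by auto
    then obtain m where m: "\<And>n. occ w b n \<Longrightarrow> n < m" unfolding finite_nat_set_iff_bounded by auto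
    have "(sshift ^^ m) b \<in> space P_M" using measurable_space[OF shiftn_meas] b(1) by auto
    moreover have "\<not> occ w ((sshift ^^ m) b) (j*L)" for j using m[of "j*L + m"] by (auto simp: occ_shiftn)
    ultimately have "(sshift ^^ m) b \<in> E" by (auto simp: E_def)
    thus "b \<in> (\<Union>m. N m)" using b by (auto simp: N_def)
  qed
  ultimately show ?thesis by (rule AE_I')
qed


context bset begin

lemma zx_zeros: "(\<forall>i<m. b i \<noteq> 1) \<Longrightarrow> zx b = zx ((sshift ^^ m) b) / \<beta>^m"
proof (induction m arbitrary: b)
  case 0 thus ?case by simp
next
  case (Suc m)
  have "zx b = zx (sshift b) / \<beta>" using zx_step[of b] Suc.prems by (simp add: ind_def)
  also have "zx (sshift b) = zx ((sshift ^^ m) (sshift b)) / \<beta>^m"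
    using Suc.prems by (intro Suc.IH) (auto simp: sshift_app)
  finally show ?case by (simp add: shiftn_Suc del: funpow.simps)
qed

lemma zy_zeros: "(\<forall>i<m. b i \<noteq> 2) \<Longrightarrow> zy b = zy ((sshift ^^ m) b) / \<beta>^m"
proof (induction m arbitrary: b)
  case 0 thus ?case by simp
next
  case (Suc m)
  have "zy b = zy (sshift b) / \<beta>" using zy_step[of b] Suc.prems by (simp add: ind_def)
  also have "zy (sshift b) = zy ((sshift ^^ m) (sshift b)) / \<beta>^m"
    using Suc.prems by (intro Suc.IH) (auto simp: sshift_app)
  finally show ?case by (simp add: shiftn_Suc del: funpow.simps)
qed

lemma C01_pat:
  assumes b0: "b 0 = 1" and bz: "\<forall>i<m. b (Suc i) = 0"
    and P1: "1/(\<beta>-1) < \<beta>^m" and P2: "1/(2-\<beta>) < \<beta>^m"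
  shows "zeta b \<in> Cset \<beta>"
proof -
  define T where "T = (sshift ^^ m) (sshift b)"
  define X where "X = zx T"
  define Yv where "Yv = zy T"
  define P where "P = \<beta>^m"
  define t where "t = 1/(\<beta>-1)"
  have bp: "0 < \<beta>" "1 < \<beta>" "\<beta> < 3/2" using b1 b32 by auto
  have Pp: "0 < P" using bp by (simp add: P_def)
  have tp: "0 < t" using bp by (simp add: t_def)
  have XY: "0 \<le> X" "0 \<le> Yv" "X + Yv \<le> t" using zx_bounds zy_bounds zsum_le by (auto simp: X_def Yv_def t_def)
  have zx1: "zx (sshift b) = X / P" unfolding X_def T_def P_def
    using bz by (intro zx_zeros) (auto simp: sshift_app)
  have zy1: "zy (sshift b) = Yv / P" unfolding Yv_def T_def P_def
    using bz by (intro zy_zeros) (auto simp: sshift_app)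
  have x: "zx b = (1 + X/P)/\<beta>" using zx_step[of b] b0 zx1 by (simp add: ind_def)
  have y: "zy b = (Yv/P)/\<beta>" using zy_step[of b] b0 zy1 by (simp add: ind_def)
  have "1/\<beta> \<le> zx b" unfolding x using XY Pp bp by (intro divide_right_mono) auto
  moreover have "zy b < 1/\<beta>"
  proof -
    have "Yv < P" using XY P1 unfolding P_def t_def by linarith
    hence "Yv/P < 1" using Pp by (simp add: divide_less_eq)
    thus ?thesis unfolding y using bp by (intro divide_strict_right_mono) auto
  qed
  moreover have "zx b + zy b \<le> 1/(\<beta>*(\<beta>-1))"
  proof -
    have "zx b + zy b = (1 + (X+Yv)/P)/\<beta>" unfolding x y by (simp add: add_divide_distrib)
    also have "\<dots> \<le> (1 + t/P)/\<beta>" using XY Pp bp by (intro divide_right_mono add_left_mono) auto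
    also have "1 + t/P \<le> t"
    proof -
      have "1/P < 2 - \<beta>" using P2 Pp bp unfolding P_def by (simp add: field_simps)
      hence "t * (1/P) \<le> t * (2 - \<beta>)" using tp by (intro mult_left_mono) auto
      moreover have "t * (2 - \<beta>) = t - 1" using bp by (simp add: t_def field_simps)
      ultimately show ?thesis by simp
    qed
    hence "(1 + t/P)/\<beta> \<le> t/\<beta>" using bp by (intro divide_right_mono) auto
    also have "t/\<beta> = 1/(\<beta>*(\<beta>-1))" by (simp add: t_def)
    finally show ?thesis .
  qed
  ultimately have "zeta b \<in> C01 \<beta>" using zeta_S[of b] by (simp add: zeta_def memC01)
  thus ?thesis by (simp add: Cset_def)
qed

lemma s0_lt: "1/\<beta> + 1/\<beta>^2 + 1/\<beta>^4 < 1/(\<beta>*(\<beta>-1))"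
proof -
  have bp: "0 < \<beta>" "1 < \<beta>" using b1 by auto
  have g4: "\<beta>^4 \<le> \<beta>^3 + \<beta>" using g_le bp mult_left_mono[OF g_le, of \<beta>]
    by (simp add: algebra_simps power_Suc[symmetric] del: power_Suc)
  have sq: "0 < (\<beta>-1)^2" using bp by simp
  hence sq': "0 < \<beta>^2 - 2*\<beta> + 1" by (simp add: power2_eq_square algebra_simps)
  have key: "(\<beta>-1)*(\<beta>^3+\<beta>^2+1) < \<beta>^3"
  proof -
    have "(\<beta>-1)*(\<beta>^3+\<beta>^2+1) = \<beta>^4 - \<beta>^2 + \<beta> - 1"
      by (simp add: algebra_simps power2_eq_square power3_eq_cube numeral_eq_Suc)
    thus ?thesis using g4 sq' by simp
  qed
  have "1/\<beta> + 1/\<beta>^2 + 1/\<beta>^4 = (\<beta>^3+\<beta>^2+1)/\<beta>^4"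
    using bp by (simp add: field_simps numeral_eq_Suc)
  also have "\<dots> < (\<beta>^3/(\<beta>-1))/\<beta>^4"
  proof (rule divide_strict_right_mono)
    show "\<beta>^3+\<beta>^2+1 < \<beta>^3/(\<beta>-1)" using key bp by (simp add: less_divide_eq mult.commute)
  qed (use bp in simp)
  also have "(\<beta>^3/(\<beta>-1))/\<beta>^4 = 1/(\<beta>*(\<beta>-1))"
    using bp by (simp add: field_simps numeral_eq_Suc)
  finally show ?thesis .
qed

lemma y_ge: "1/\<beta> \<le> 1/\<beta>^2 + 1/\<beta>^4"
proof -
  have bp: "0 < \<beta>" using b1 by auto
  have "1/\<beta> = \<beta>^3/\<beta>^4" using bp by (simp add: field_simps numeral_eq_Suc)
  also have "\<dots> \<le> (\<beta>^2 + 1)/\<beta>^4" using g_le bp by (intro divide_right_mono) auto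
  also have "\<dots> = 1/\<beta>^2 + 1/\<beta>^4" using bp by (simp add: field_simps numeral_eq_Suc)
  finally show ?thesis .
qed

lemma C012_pat:
  assumes b0: "b 0 = 1" "b 1 = 2" "b 2 = 0" "b 3 = 2" and bz: "\<forall>i<m. b (4 + i) = 0"
    and P1: "(1/(\<beta>-1)) / (1/(\<beta>*(\<beta>-1)) - (1/\<beta> + 1/\<beta>^2 + 1/\<beta>^4)) < \<beta>^m"
  shows "zeta b \<in> C012 \<beta>"
proof -
  define b4 where "b4 = (sshift ^^ 4) b"
  define T where "T = (sshift ^^ m) b4"
  define X where "X = zx T"
  define Yv where "Yv = zy T"
  define P where "P = \<beta>^m"
  define t where "t = 1/(\<beta>-1)"
  define c where "c = 1/(\<beta>*(\<beta>-1))"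
  define s0 where "s0 = 1/\<beta> + 1/\<beta>^2 + 1/\<beta>^4"
  have bp: "0 < \<beta>" "1 < \<beta>" using b1 by auto
  have Pp: "0 < P" using bp by (simp add: P_def)
  have tp: "0 < t" using bp by (simp add: t_def)
  have ds: "0 < c - s0" using s0_lt by (simp add: c_def s0_def)
  have XY: "0 \<le> X" "0 \<le> Yv" "X + Yv \<le> t" using zx_bounds zy_bounds zsum_le by (auto simp: X_def Yv_def t_def)
  have b4i: "b4 i = b (i + 4)" for i by (simp add: b4_def shiftn)
  have zx4: "zx b4 = X / P" unfolding X_def T_def P_def
    using bz by (intro zx_zeros) (auto simp: b4i add.commute)
  have zy4: "zy b4 = Yv / P" unfolding Yv_def T_def P_def
    using bz by (intro zy_zeros) (auto simp: b4i add.commute)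
  have s4: "b4 = sshift (sshift (sshift (sshift b)))" by (simp add: b4_def numeral_eq_Suc)
  have sa: "sshift (sshift b) 0 = b 2" "sshift b 0 = b 1" "sshift (sshift (sshift b)) 0 = b 3"
    by (simp_all add: sshift_app numeral_eq_Suc)
  have x: "zx b = 1/\<beta> + X/(P*\<beta>^4)"
  proof -
    have "zx b = (1 + zx (sshift b))/\<beta>" using zx_step[of b] b0 by (simp add: ind_def)
    also have "zx (sshift b) = zx (sshift (sshift b))/\<beta>" using zx_step[of "sshift b"] sa b0 by (simp add: ind_def)
    also have "zx (sshift (sshift b)) = zx (sshift (sshift (sshift b)))/\<beta>" using zx_step[of "sshift (sshift b)"] sa b0 by (simp add: ind_def)
    also have "zx (sshift (sshift (sshift b))) = zx b4/\<beta>" using zx_step[of "sshift (sshift (sshift b))"] sa b0 s4 by (simp add: ind_def)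
    finally show ?thesis using bp Pp by (simp add: zx4 field_simps numeral_eq_Suc)
  qed
  have y: "zy b = 1/\<beta>^2 + 1/\<beta>^4 + Yv/(P*\<beta>^4)"
  proof -
    have "zy b = zy (sshift b)/\<beta>" using zy_step[of b] b0 by (simp add: ind_def)
    also have "zy (sshift b) = (1 + zy (sshift (sshift b)))/\<beta>" using zy_step[of "sshift b"] sa b0 by (simp add: ind_def)
    also have "zy (sshift (sshift b)) = zy (sshift (sshift (sshift b)))/\<beta>" using zy_step[of "sshift (sshift b)"] sa b0 by (simp add: ind_def)
    also have "zy (sshift (sshift (sshift b))) = (1 + zy b4)/\<beta>" using zy_step[of "sshift (sshift (sshift b))"] sa b0 s4 by (simp add: ind_def)
    finally show ?thesis using bp Pp by (simp add: zy4 field_simps numeral_eq_Suc)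
  qed
  have q: "0 \<le> X/(P*\<beta>^4)" "0 \<le> Yv/(P*\<beta>^4)" using XY Pp bp by auto
  have "1/\<beta> \<le> zx b" using x q by simp
  moreover have "1/\<beta> \<le> zy b" using y q y_ge by simp
  moreover have "zx b + zy b \<le> c"
  proof -
    have "zx b + zy b = s0 + (X+Yv)/(P*\<beta>^4)" unfolding x y s0_def by (simp add: add_divide_distrib)
    also have "(X+Yv)/(P*\<beta>^4) \<le> t/P"
    proof -
      have "(X+Yv)/(P*\<beta>^4) \<le> t/(P*\<beta>^4)" using XY Pp bp by (intro divide_right_mono) auto
      also have "\<dots> \<le> t/P" using tp Pp bp by (intro divide_left_mono) (auto simp: one_le_power)
      finally show ?thesis .
    qed
    also have "t/P < c - s0"
    proof -
      have "t/(c-s0) < P" using P1 by (simp add: P_def t_def c_def s0_def)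
      thus ?thesis using ds Pp by (simp add: field_simps)
    qed
    finally show ?thesis by simp
  qed
  ultimately show "zeta b \<in> C012 \<beta>" using zeta_S[of b] by (simp add: zeta_def memC012 c_def)
qed

lemma AE_G: "AE b in P_M. b \<in> G"
proof -
  define t where "t = 1/(\<beta>-1)"
  define c where "c = 1/(\<beta>*(\<beta>-1))"
  define s0 where "s0 = 1/\<beta> + 1/\<beta>^2 + 1/\<beta>^4"
  have bp: "1 < \<beta>" "\<beta> < 3/2" using b1 b32 by auto
  obtain m1 where m1: "t + 1/(2-\<beta>) < \<beta>^m1" using real_arch_pow[OF b1] by blast
  have pos: "0 < 1/(\<beta>-1)" "0 < 1/(2-\<beta>)" using bp by auto
  have m1a: "1/(\<beta>-1) < \<beta>^m1" "1/(2-\<beta>) < \<beta>^m1" using m1 pos unfolding t_def by linarith+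
  obtain m2 where m2: "t/(c - s0) < \<beta>^m2" using real_arch_pow[OF b1] by blast
  define w1 where "w1 = 1 # replicate m1 (0::nat)"
  define w2 where "w2 = [1,2,0,2] @ replicate m2 (0::nat)"
  have w1s: "set w1 \<subseteq> {0,1,2}" "w1 \<noteq> []" by (auto simp: w1_def)
  have w2s: "set w2 \<subseteq> {0,1,2}" "w2 \<noteq> []" by (auto simp: w2_def)
  have o1: "occ w1 b n \<Longrightarrow> n \<in> VC b" for b n
  proof -
    assume "occ w1 b n"
    hence o: "occ w1 ((sshift ^^ n) b) 0" by (simp add: occ_shiftn)
    have "zeta ((sshift ^^ n) b) \<in> Cset \<beta>"
    proof (rule C01_pat[OF _ _ m1a])
      show "(sshift ^^ n) b 0 = 1" using o by (auto simp: occ_def w1_def)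
      show "\<forall>i<m1. (sshift ^^ n) b (Suc i) = 0"
      proof (intro allI impI)
        fix i assume "i < m1"
        thus "(sshift ^^ n) b (Suc i) = 0" using o unfolding occ_def w1_def
          by (metis add_0 length_Cons length_replicate Suc_less_eq nth_Cons_Suc nth_replicate)
      qed
    qed
    thus "n \<in> VC b" by (simp add: VC_def zz_def)
  qed
  have o2: "occ w2 b n \<Longrightarrow> n \<in> V3 b" for b n
  proof -
    assume "occ w2 b n"
    hence "occ w2 ((sshift ^^ n) b) 0" by (simp add: occ_shiftn)
    hence o: "\<forall>i<length w2. (sshift ^^ n) b i = w2 ! i" by (simp add: occ_def)
    have l: "length w2 = 4 + m2" by (simp add: w2_def)
    have "zeta ((sshift ^^ n) b) \<in> C012 \<beta>"
    proof (rule C012_pat)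
      show "(sshift ^^ n) b 0 = 1" "(sshift ^^ n) b 1 = 2" "(sshift ^^ n) b 2 = 0" "(sshift ^^ n) b 3 = 2"
        using o l by (auto simp: w2_def)
      show "\<forall>i<m2. (sshift ^^ n) b (4 + i) = 0"
      proof (intro allI impI)
        fix i assume "i < m2"
        hence "(sshift ^^ n) b (4 + i) = w2 ! (4 + i)" using o l by auto
        also have "\<dots> = 0" using \<open>i < m2\<close> by (simp add: w2_def nth_append)
        finally show "(sshift ^^ n) b (4 + i) = 0" .
      qed
      show "(1/(\<beta>-1)) / (1/(\<beta>*(\<beta>-1)) - (1/\<beta> + 1/\<beta>^2 + 1/\<beta>^4)) < \<beta>^m2"
        using m2 by (simp add: t_def c_def s0_def)
    qed
    thus "n \<in> V3 b" by (simp add: V3_def zz_def)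
  qed
  have "AE b in P_M. infinite {n. occ w1 b n}" by (rule pattern_AE[OF w1s])
  moreover have "AE b in P_M. infinite {n. occ w2 b n}" by (rule pattern_AE[OF w2s])
  moreover have "AE b in P_M. b \<in> space P_M" by (rule AE_space)
  ultimately show ?thesis
  proof eventually_elim
    case (elim b)
    have "infinite (VC b)" using elim(1) o1 by (metis infinite_super mem_Collect_eq subsetI)
    moreover have "infinite (V3 b)" using elim(2) o2 by (metis infinite_super mem_Collect_eq subsetI)
    ultimately show ?case using elim(3) by (simp add: G_def spaceP)
  qed
qed

end

lemma fst_bm[measurable]: "(fst :: real\<times>real \<Rightarrow> real) \<in> borel_measurable borel"
  by (intro borel_measurable_continuous_onI continuous_intros)
lemma snd_bm[measurable]: "(snd :: real\<times>real \<Rightarrow> real) \<in> borel_measurable borel"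
  by (intro borel_measurable_continuous_onI continuous_intros)

lemma pred_cnt:
  assumes "\<And>m. Measurable.pred M (Q m)"
  shows "Measurable.pred M (\<lambda>x. cnt {m. Q m x} n = k)"
proof (induction n arbitrary: k)
  case 0 thus ?case by (cases "k = 0") simp_all
next
  case (Suc n)
  have e: "(cnt {m. Q m x} (Suc n) = k) \<longleftrightarrow> (Q n x \<and> 0 < k \<and> cnt {m. Q m x} n = k - 1) \<or> (\<not> Q n x \<and> cnt {m. Q m x} n = k)" for x
    by (auto simp: cnt_Suc)
  show ?case unfolding e using Suc assms by measurable
qed

lemma pred_exsel:
  assumes "\<And>m. Measurable.pred M (Q m)" "\<And>m. Measurable.pred M (R m)"
  shows "Measurable.pred M (\<lambda>x. exsel {m. Q m x} (\<lambda>n. R n x) k)"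
proof -
  have c: "\<And>n k. Measurable.pred M (\<lambda>x. cnt {m. Q m x} n = k)" by (rule pred_cnt) (rule assms(1))
  have "Measurable.pred M (\<lambda>x. \<exists>n. Q n x \<and> cnt {m. Q m x} n = k \<and> R n x)"
    using assms c by measurable
  thus ?thesis unfolding exsel_def by simp
qed

lemma pred_coord: "Measurable.pred P_M (\<lambda>b. b n = c)"
proof -
  have e: "{b \<in> space P_M. b n = c} = (\<lambda>b. b n) -` {c} \<inter> space P_M" by auto
  show ?thesis unfolding pred_def e by (rule coord_set)
qed

context bset begin

lemma S_borel[measurable]: "S_beta \<beta> \<in> sets borel"
proof -
  have "S_beta \<beta> = {z. 0 \<le> fst z \<and> 0 \<le> snd z \<and> fst z + snd z \<le> 1/(\<beta>-1)}"
    unfolding S_beta_def by auto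
  also have "\<dots> \<in> sets borel" by measurable
  finally show ?thesis .
qed

lemma reg_borel_aux: "S_beta \<beta> \<inter> {(x,y). P x y} \<in> sets borel" if "{z. P (fst z) (snd z)} \<in> sets borel"
proof -
  have "S_beta \<beta> \<inter> {(x,y). P x y} = S_beta \<beta> \<inter> {z. P (fst z) (snd z)}" by auto
  thus ?thesis using that by auto
qed

lemma E0_borel[measurable]: "E0 \<beta> \<in> sets borel" unfolding E0_def by (rule reg_borel_aux) measurable
lemma E1_borel[measurable]: "E1 \<beta> \<in> sets borel" unfolding E1_def by (rule reg_borel_aux) measurable
lemma E2_borel[measurable]: "E2 \<beta> \<in> sets borel" unfolding E2_def by (rule reg_borel_aux) measurable
lemma C01_borel[measurable]: "C01 \<beta> \<in> sets borel" unfolding C01_def by (rule reg_borel_aux) measurable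
lemma C12_borel[measurable]: "C12 \<beta> \<in> sets borel" unfolding C12_def by (rule reg_borel_aux) measurable
lemma C02_borel[measurable]: "C02 \<beta> \<in> sets borel" unfolding C02_def by (rule reg_borel_aux) measurable
lemma C012_borel[measurable]: "C012 \<beta> \<in> sets borel" unfolding C012_def by (rule reg_borel_aux) measurable
lemma Cset_borel[measurable]: "Cset \<beta> \<in> sets borel" unfolding Cset_def by measurable

lemma ser_meas: assumes f: "\<And>i. f i \<in> borel_measurable M" and b: "\<And>i x. \<bar>f i x\<bar> \<le> 1"
  shows "(\<lambda>x. ser (\<lambda>i. f i x)) \<in> borel_measurable M"
proof (rule borel_measurable_LIMSEQ_metric)
  fix n show "(\<lambda>x. \<Sum>i<n. f i x / \<beta>^Suc i) \<in> borel_measurable M" using f by measurable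
next
  fix x assume "x \<in> space M"
  show "(\<lambda>n. \<Sum>i<n. f i x / \<beta>^Suc i) \<longlonglongrightarrow> ser (\<lambda>i. f i x)"
    unfolding ser_def by (rule summable_LIMSEQ) (rule ser_summable[OF b])
qed

lemma ind_coord_meas: "(\<lambda>b. ind d (b i)) \<in> borel_measurable P_M"
proof -
  have "(\<lambda>x. ind d x) \<in> borel_measurable M3"
    by (subst measurable_cong_sets[OF sets_uniform_count_measure_count_space refl]) simp
  thus ?thesis using measurable_compose[OF coord_meas] by blast
qed

lemma zx_meas: "zx \<in> borel_measurable P_M"
  unfolding zx_def[abs_def] by (rule ser_meas[OF ind_coord_meas ind_abs])
lemma zy_meas: "zy \<in> borel_measurable P_M"
  unfolding zy_def[abs_def] by (rule ser_meas[OF ind_coord_meas ind_abs])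

lemma zeta_meas: "zeta \<in> borel_measurable P_M"
  unfolding zeta_def[abs_def] using zx_meas zy_meas by (rule borel_measurable_Pair)

lemma zz_meas: "(\<lambda>b. zz b n) \<in> borel_measurable P_M"
  unfolding zz_def using measurable_compose[OF shiftn_meas zeta_meas] .

lemma pred_zz: "R \<in> sets borel \<Longrightarrow> Measurable.pred P_M (\<lambda>b. zz b n \<in> R)"
  by (rule pred_sets2[OF _ zz_meas[of n]])

lemma pred_omg: "Measurable.pred P_M (\<lambda>b. exsel (VC b) (\<lambda>n. dec (zz b n) (b n) = 1) k)"
proof -
  have e: "dec (zz b n) (b n) = 1 \<longleftrightarrow> \<not> (b n = 0 \<or> (zz b n \<in> C12 \<beta> \<and> b n = 1))" for b n
    by (simp add: dec_def)
  show ?thesis unfolding VC_def e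
    by (rule pred_exsel) (intro pred_intros_logic pred_zz pred_coord Cset_borel C12_borel)+
qed

lemma pred_ups: "Measurable.pred P_M (\<lambda>b. exsel (V3 b) (\<lambda>n. b n = c) k)"
  unfolding V3_def by (rule pred_exsel) (intro pred_zz pred_coord C012_borel)+

lemma omg_meas: "omg \<in> measurable P_M Omega_M"
proof -
  have "(\<lambda>b. omg b k) \<in> measurable P_M (count_space {0,1})" for k
    unfolding omg_def by (rule measurable_If[OF measurable_const measurable_const predE[OF pred_omg]]) auto
  hence "(\<lambda>b k. omg b k) \<in> measurable P_M Omega_M"
    unfolding Omega_M_def by (intro measurable_PiM_single') (auto simp: space_PiM PiE_UNIV_domain omg_def)
  thus ?thesis by simp
qed

lemma ups_meas: "ups \<in> measurable P_M Ups_M"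
proof -
  have "(\<lambda>b. ups b k) \<in> measurable P_M (count_space {0,1,2})" for k
    unfolding ups_def by (rule measurable_If[OF measurable_const measurable_If[OF measurable_const measurable_const predE[OF pred_ups]] predE[OF pred_ups]]) auto
  hence "(\<lambda>b k. ups b k) \<in> measurable P_M Ups_M"
    unfolding Ups_M_def by (intro measurable_PiM_single') (auto simp: space_PiM PiE_UNIV_domain ups_def)
  thus ?thesis by simp
qed

lemma inv_meas: "inv \<in> measurable P_M (X_M \<beta>)"
proof -
  have z: "zeta \<in> measurable P_M (restrict_space borel (S_beta \<beta>))"
    by (rule measurable_restrict_space2) (auto simp: zeta_S zeta_meas)
  show ?thesis unfolding X_M_def inv_def[abs_def]
    by (intro measurable_Pair omg_meas ups_meas z)
qed


lemma fst_X: "fst \<in> measurable (X_M \<beta>) Omega_M"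
  unfolding X_M_def by (rule measurable_fst)
lemma ups_X: "(\<lambda>p. fst (snd p)) \<in> measurable (X_M \<beta>) Ups_M"
  unfolding X_M_def by measurable
lemma zR_X: "(\<lambda>p. snd (snd p)) \<in> measurable (X_M \<beta>) (restrict_space borel (S_beta \<beta>))"
  unfolding X_M_def by measurable
lemma z_X: "(\<lambda>p. snd (snd p)) \<in> borel_measurable (X_M \<beta>)"
  using measurable_compose[OF zR_X measurable_restrict_space1[OF measurable_ident_sets[OF refl]]]
  by simp

lemma pred_reg_X: "R \<in> sets borel \<Longrightarrow> Measurable.pred (X_M \<beta>) (\<lambda>p. snd (snd p) \<in> R)"
  by (rule pred_sets2[OF _ z_X])

lemma w0_X: "(\<lambda>p. fst p 0) \<in> measurable (X_M \<beta>) (count_space UNIV)"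
proof -
  have "(\<lambda>p. fst p 0) \<in> measurable (X_M \<beta>) (count_space {0,1})"
    using measurable_compose[OF fst_X, of "\<lambda>w. w 0"] unfolding Omega_M_def
    by (simp add: measurable_component_singleton)
  moreover have "(\<lambda>x. x) \<in> measurable (count_space {0,1::nat}) (count_space UNIV)" by simp
  ultimately show ?thesis using measurable_compose by blast
qed

lemma u0_X: "(\<lambda>p. fst (snd p) 0) \<in> measurable (X_M \<beta>) (count_space UNIV)"
proof -
  have "(\<lambda>p. fst (snd p) 0) \<in> measurable (X_M \<beta>) (count_space {0,1,2})"
    using measurable_compose[OF ups_X, of "\<lambda>w. w 0"] unfolding Ups_M_def
    by (simp add: measurable_component_singleton)
  moreover have "(\<lambda>x. x) \<in> measurable (count_space {0,1::nat,2}) (count_space UNIV)" by simp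
  ultimately show ?thesis using measurable_compose by blast
qed

lemma pred_w0: "Measurable.pred (X_M \<beta>) (\<lambda>p. fst p 0 = c)"
proof -
  have "Measurable.pred (X_M \<beta>) (\<lambda>p. fst p 0 \<in> {c})" by (rule pred_sets2[OF _ w0_X]) simp
  thus ?thesis by simp
qed

lemma dig_alt: "dig \<beta> p = (if snd (snd p) \<in> E0 \<beta> then 0
     else if snd (snd p) \<in> E1 \<beta> then 1
     else if snd (snd p) \<in> E2 \<beta> then 2
     else if snd (snd p) \<in> C01 \<beta> then (if fst p 0 = 0 then 0 else 1)
     else if snd (snd p) \<in> C12 \<beta> then (if fst p 0 = 0 then 1 else 2)
     else if snd (snd p) \<in> C02 \<beta> then (if fst p 0 = 0 then 0 else 2)
     else if snd (snd p) \<in> C012 \<beta> then fst (snd p) 0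
     else 0)"
  by (cases p) (simp add: dig_def)

lemma dig_meas: "dig \<beta> \<in> measurable (X_M \<beta>) (count_space UNIV)"
proof -
  have P: "\<And>R. R \<in> sets borel \<Longrightarrow> {p \<in> space (X_M \<beta>). snd (snd p) \<in> R} \<in> sets (X_M \<beta>)"
    using pred_reg_X by (simp add: pred_def)
  have W: "{p \<in> space (X_M \<beta>). fst p 0 = 0} \<in> sets (X_M \<beta>)" using pred_w0 by (simp add: pred_def)
  have "(\<lambda>p. if snd (snd p) \<in> E0 \<beta> then 0
     else if snd (snd p) \<in> E1 \<beta> then 1
     else if snd (snd p) \<in> E2 \<beta> then 2
     else if snd (snd p) \<in> C01 \<beta> then (if fst p 0 = 0 then 0 else 1)
     else if snd (snd p) \<in> C12 \<beta> then (if fst p 0 = 0 then 1 else 2)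
     else if snd (snd p) \<in> C02 \<beta> then (if fst p 0 = 0 then 0 else 2)
     else if snd (snd p) \<in> C012 \<beta> then fst (snd p) 0
     else 0::nat) \<in> measurable (X_M \<beta>) (count_space UNIV)"
    by (intro measurable_If measurable_const P W u0_X E0_borel E1_borel E2_borel C01_borel C12_borel C02_borel C012_borel) auto
  thus ?thesis by (simp add: dig_alt[abs_def])
qed

lemma pred_dig: "Measurable.pred (X_M \<beta>) (\<lambda>p. dig \<beta> p = c)"
proof -
  have "Measurable.pred (X_M \<beta>) (\<lambda>p. dig \<beta> p \<in> {c})" by (rule pred_sets2[OF _ dig_meas]) simp
  thus ?thesis by simp
qed

lemma shift_meas_gen: "sshift \<in> measurable (Pi\<^sub>M UNIV (\<lambda>_::nat. N)) (Pi\<^sub>M UNIV (\<lambda>_. N))"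
proof -
  have "(\<lambda>\<omega> i. \<omega> (Suc i)) \<in> measurable (Pi\<^sub>M UNIV (\<lambda>_::nat. N)) (Pi\<^sub>M UNIV (\<lambda>_. N))"
    by (rule measurable_PiM_single') (auto simp: space_PiM PiE_UNIV_domain)
  thus ?thesis by (simp add: sshift_def[abs_def])
qed

lemma K_alt: "K \<beta> p =
   (if snd (snd p) \<notin> E0 \<beta> \<union> E1 \<beta> \<union> E2 \<beta> \<and> snd (snd p) \<in> Cset \<beta> then sshift (fst p) else fst p,
    if snd (snd p) \<notin> E0 \<beta> \<union> E1 \<beta> \<union> E2 \<beta> \<union> Cset \<beta> \<and> snd (snd p) \<in> C012 \<beta> then sshift (fst (snd p)) else fst (snd p),
    (\<beta> * fst (snd (snd p)) - ind 1 (dig \<beta> p), \<beta> * snd (snd (snd p)) - ind 2 (dig \<beta> p)))"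
  by (cases p) (simp add: K_comp)

lemma K_meas: "K \<beta> \<in> measurable (X_M \<beta>) (X_M \<beta>)"
proof -
  have P1: "{p \<in> space (X_M \<beta>). snd (snd p) \<notin> E0 \<beta> \<union> E1 \<beta> \<union> E2 \<beta> \<and> snd (snd p) \<in> Cset \<beta>} \<in> sets (X_M \<beta>)"
  proof -
    have "{p \<in> space (X_M \<beta>). snd (snd p) \<in> Cset \<beta> - (E0 \<beta> \<union> E1 \<beta> \<union> E2 \<beta>)} \<in> sets (X_M \<beta>)"
      using pred_reg_X[of "Cset \<beta> - (E0 \<beta> \<union> E1 \<beta> \<union> E2 \<beta>)"] by (simp only: pred_def) simp
    moreover have "{p \<in> space (X_M \<beta>). snd (snd p) \<notin> E0 \<beta> \<union> E1 \<beta> \<union> E2 \<beta> \<and> snd (snd p) \<in> Cset \<beta>} = {p \<in> space (X_M \<beta>). snd (snd p) \<in> Cset \<beta> - (E0 \<beta> \<union> E1 \<beta> \<union> E2 \<beta>)}" by auto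
    ultimately show ?thesis by simp
  qed
  have P2: "{p \<in> space (X_M \<beta>). snd (snd p) \<notin> E0 \<beta> \<union> E1 \<beta> \<union> E2 \<beta> \<union> Cset \<beta> \<and> snd (snd p) \<in> C012 \<beta>} \<in> sets (X_M \<beta>)"
  proof -
    have "{p \<in> space (X_M \<beta>). snd (snd p) \<in> C012 \<beta> - (E0 \<beta> \<union> E1 \<beta> \<union> E2 \<beta> \<union> Cset \<beta>)} \<in> sets (X_M \<beta>)"
      using pred_reg_X[of "C012 \<beta> - (E0 \<beta> \<union> E1 \<beta> \<union> E2 \<beta> \<union> Cset \<beta>)"] by (simp only: pred_def) simp
    moreover have "{p \<in> space (X_M \<beta>). snd (snd p) \<notin> E0 \<beta> \<union> E1 \<beta> \<union> E2 \<beta> \<union> Cset \<beta> \<and> snd (snd p) \<in> C012 \<beta>} = {p \<in> space (X_M \<beta>). snd (snd p) \<in> C012 \<beta> - (E0 \<beta> \<union> E1 \<beta> \<union> E2 \<beta> \<union> Cset \<beta>)}" by auto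
    ultimately show ?thesis by simp
  qed
  have so: "(\<lambda>p. sshift (fst p)) \<in> measurable (X_M \<beta>) Omega_M"
    using measurable_compose[OF fst_X[unfolded Omega_M_def] shift_meas_gen] unfolding Omega_M_def by simp
  have su: "(\<lambda>p. sshift (fst (snd p))) \<in> measurable (X_M \<beta>) Ups_M"
    using measurable_compose[OF ups_X[unfolded Ups_M_def] shift_meas_gen] unfolding Ups_M_def by simp
  have i1: "(\<lambda>p. ind d (dig \<beta> p)) \<in> borel_measurable (X_M \<beta>)" for d
    using measurable_compose[OF dig_meas, of "ind d" borel] by simp
  have zb: "(\<lambda>p. (\<beta> * fst (snd (snd p)) - ind 1 (dig \<beta> p), \<beta> * snd (snd (snd p)) - ind 2 (dig \<beta> p))) \<in> borel_measurable (X_M \<beta>)"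
  proof -
    have f1: "(\<lambda>p. fst (snd (snd p))) \<in> borel_measurable (X_M \<beta>)" using measurable_compose[OF z_X fst_bm] by simp
    have f2: "(\<lambda>p. snd (snd (snd p))) \<in> borel_measurable (X_M \<beta>)" using measurable_compose[OF z_X snd_bm] by simp
    show ?thesis
      by (intro borel_measurable_Pair borel_measurable_diff borel_measurable_times borel_measurable_const f1 f2 i1)
  qed
  have zr: "(\<lambda>p. (\<beta> * fst (snd (snd p)) - ind 1 (dig \<beta> p), \<beta> * snd (snd (snd p)) - ind 2 (dig \<beta> p))) \<in> measurable (X_M \<beta>) (restrict_space borel (S_beta \<beta>))"
  proof (rule measurable_restrict_space2[OF _ zb])
    show "(\<lambda>p. (\<beta> * fst (snd (snd p)) - ind 1 (dig \<beta> p), \<beta> * snd (snd (snd p)) - ind 2 (dig \<beta> p))) \<in> space (X_M \<beta>) \<rightarrow> S_beta \<beta>"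
    proof
      fix p assume "p \<in> space (X_M \<beta>)"
      hence "K \<beta> p \<in> space (X_M \<beta>)" by (rule K_space)
      thus "(\<beta> * fst (snd (snd p)) - ind 1 (dig \<beta> p), \<beta> * snd (snd (snd p)) - ind 2 (dig \<beta> p)) \<in> S_beta \<beta>"
        by (simp add: spaceX K_alt[of p])
    qed
  qed
  have "(\<lambda>p. (if snd (snd p) \<notin> E0 \<beta> \<union> E1 \<beta> \<union> E2 \<beta> \<and> snd (snd p) \<in> Cset \<beta> then sshift (fst p) else fst p,
    if snd (snd p) \<notin> E0 \<beta> \<union> E1 \<beta> \<union> E2 \<beta> \<union> Cset \<beta> \<and> snd (snd p) \<in> C012 \<beta> then sshift (fst (snd p)) else fst (snd p),
    (\<beta> * fst (snd (snd p)) - ind 1 (dig \<beta> p), \<beta> * snd (snd (snd p)) - ind 2 (dig \<beta> p)))) \<in> measurable (X_M \<beta>) (X_M \<beta>)"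
    unfolding X_M_def[of \<beta>]
    apply (rule measurable_Pair)
     apply (rule measurable_If[OF so[unfolded X_M_def] fst_X[unfolded X_M_def] P1[unfolded X_M_def]])
    apply (rule measurable_Pair)
     apply (rule measurable_If[OF su[unfolded X_M_def] ups_X[unfolded X_M_def] P2[unfolded X_M_def]])
    apply (rule zr[unfolded X_M_def])
    done
  thus ?thesis unfolding K_alt[abs_def] .
qed

lemma Kpow_meas: "(K \<beta> ^^ n) \<in> measurable (X_M \<beta>) (X_M \<beta>)"
proof (induction n)
  case 0 thus ?case by simp
next
  case (Suc n)
  have "(\<lambda>p. K \<beta> ((K \<beta> ^^ n) p)) \<in> measurable (X_M \<beta>) (X_M \<beta>)"
    by (rule measurable_compose[OF Suc.IH K_meas])
  thus ?case by (simp add: comp_def)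
qed

lemma phi_meas: "phi \<beta> \<in> measurable (X_M \<beta>) P_M"
proof -
  have c: "(\<lambda>p. dig \<beta> ((K \<beta> ^^ n) p)) \<in> measurable (X_M \<beta>) M3" for n
  proof -
    have "(\<lambda>p. dig \<beta> ((K \<beta> ^^ n) p)) \<in> measurable (X_M \<beta>) (count_space {0,1,2})"
    proof (subst measurable_count_space_eq2, simp, intro conjI ballI)
      show "(\<lambda>p. dig \<beta> ((K \<beta> ^^ n) p)) \<in> space (X_M \<beta>) \<rightarrow> {0,1,2}"
        using dig_Y Kpow_space by auto
      fix a
      show "(\<lambda>p. dig \<beta> ((K \<beta> ^^ n) p)) -` {a} \<inter> space (X_M \<beta>) \<in> sets (X_M \<beta>)"
        using measurable_compose[OF Kpow_meas dig_meas] by (rule measurable_sets) simp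
    qed
    thus ?thesis by (subst measurable_cong_sets[OF refl sets_uniform_count_measure_count_space])
  qed
  have "(\<lambda>p n. dig \<beta> ((K \<beta> ^^ n) p)) \<in> measurable (X_M \<beta>) P_M"
    unfolding P_M_def
    by (rule measurable_PiM_single') (use c dig_Y Kpow_space in \<open>auto simp: P_M_def space_PiM PiE_UNIV_domain space_uniform_count_measure\<close>)
  thus ?thesis by (simp add: phi_def[abs_def])
qed

lemma inf_unb: "infinite {n::nat. P n} \<longleftrightarrow> (\<forall>m. \<exists>n. m < n \<and> P n)"
  unfolding infinite_nat_iff_unbounded by auto

lemma Z_sets: "Z \<beta> \<in> sets (X_M \<beta>)"
proof -
  have p: "Measurable.pred (X_M \<beta>) (\<lambda>p. snd (snd ((K \<beta> ^^ n) p)) \<in> R)" if "R \<in> sets borel" for n R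
    using pred_sets2[OF that measurable_compose[OF Kpow_meas z_X]] by simp
  have "Measurable.pred (X_M \<beta>) (\<lambda>p. (\<forall>m. \<exists>n. m < n \<and> snd (snd ((K \<beta> ^^ n) p)) \<in> Cset \<beta>) \<and>
      (\<forall>m. \<exists>n. m < n \<and> snd (snd ((K \<beta> ^^ n) p)) \<in> C012 \<beta>))"
  proof -
    have q: "Measurable.pred (X_M \<beta>) (\<lambda>p. \<forall>m. \<exists>n. m < n \<and> snd (snd ((K \<beta> ^^ n) p)) \<in> R)" if "R \<in> sets borel" for R
      by (intro pred_intros_countable pred_intros_logic(3) measurable_const p that) auto
    show ?thesis by (intro pred_intros_logic(3) q Cset_borel C012_borel)
  qed
  thus ?thesis unfolding Z_def inf_unb pred_def .
qed

lemma G_sets: "G \<in> sets P_M"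
proof -
  have "Measurable.pred P_M (\<lambda>b. (\<forall>m. \<exists>n. m < n \<and> zz b n \<in> Cset \<beta>) \<and> (\<forall>m. \<exists>n. m < n \<and> zz b n \<in> C012 \<beta>))"
  proof -
    have q: "Measurable.pred P_M (\<lambda>b. \<forall>m. \<exists>n. m < n \<and> zz b n \<in> R)" if "R \<in> sets borel" for R
      by (intro pred_intros_countable pred_intros_logic(3) measurable_const pred_zz that) auto
    show ?thesis by (intro pred_intros_logic(3) q Cset_borel C012_borel)
  qed
  thus ?thesis unfolding G_def VC_def V3_def inf_unb spaceP[symmetric] pred_def .
qed

end

context bset begin

definition D :: "point measure" where "D = distr P_M (X_M \<beta>) inv"

lemma sets_D: "sets D = sets (X_M \<beta>)" and space_D: "space D = space (X_M \<beta>)"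
  by (simp_all add: D_def)

lemma G_space: "G \<subseteq> space P_M" by (auto simp: G_def spaceP)

lemma emeasure_D: "A \<in> sets (X_M \<beta>) \<Longrightarrow> emeasure D A = emeasure P_M (inv -` A \<inter> space P_M)"
  unfolding D_def by (rule emeasure_distr[OF inv_meas])

lemma AE_G_eq: assumes "X \<in> sets P_M" shows "emeasure P_M (G \<inter> X) = emeasure P_M X"
proof (rule emeasure_eq_AE)
  show "AE x in P_M. (x \<in> G \<inter> X) = (x \<in> X)" using AE_G by eventually_elim auto
qed (use assms G_sets in auto)

lemma image_eq: "A \<in> sets (X_M \<beta>) \<Longrightarrow> phi \<beta> ` (Z \<beta> \<inter> A) = G \<inter> (inv -` A \<inter> space P_M)"
  unfolding phi_image using G_space by auto

lemma image_sets: "A \<in> sets (X_M \<beta>) \<Longrightarrow> phi \<beta> ` (Z \<beta> \<inter> A) \<in> sets P_M"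
  unfolding image_eq using G_sets measurable_sets[OF inv_meas] by auto

lemma nu_fun_eq: "A \<in> sets (X_M \<beta>) \<Longrightarrow> nu_fun \<beta> A = emeasure D A"
  unfolding nu_fun_def image_eq emeasure_D using measurable_sets[OF inv_meas] by (simp add: AE_G_eq)

lemma ms: "measure_space (space (X_M \<beta>)) (sets (X_M \<beta>)) (nu_fun \<beta>)"
proof -
  have "measure_space (space D) (sets D) (emeasure D)" by (rule measure_space)
  hence m: "measure_space (space (X_M \<beta>)) (sigma_sets (space (X_M \<beta>)) (sets (X_M \<beta>))) (emeasure D)"
    by (simp add: sets_D space_D sets.sigma_sets_eq)
  have "measure_space (space (X_M \<beta>)) (sigma_sets (space (X_M \<beta>)) (sets (X_M \<beta>))) (nu_fun \<beta>)"
    using m by (subst measure_space_eq[OF sets.space_closed]) (auto simp: nu_fun_eq sets.sigma_sets_eq)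
  thus ?thesis by (simp add: sets.sigma_sets_eq)
qed

lemma nu_D: "nu \<beta> = D"
proof -
  have "nu \<beta> = measure_of (space (X_M \<beta>)) (sets (X_M \<beta>)) (emeasure D)"
    unfolding nu_def by (rule measure_of_eq[OF sets.space_closed]) (auto simp: nu_fun_eq sets.sigma_sets_eq)
  also have "\<dots> = D" using measure_of_of_measure[of D] by (simp add: sets_D space_D)
  finally show ?thesis .
qed

lemma meas_D: "measurable D = measurable (X_M \<beta>)"
  by (rule ext) (rule measurable_cong_sets[OF sets_D refl])
lemma meas_D2: "measurable M D = measurable M (X_M \<beta>)"
  by (rule measurable_cong_sets[OF refl sets_D])

lemma mp_K: "mpreserving D (K \<beta>)"
  unfolding mpreserving_def
proof (intro conjI ballI)
  show "K \<beta> \<in> measurable D D" unfolding meas_D meas_D2 by (rule K_meas)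
  fix A assume "A \<in> sets D"
  hence A: "A \<in> sets (X_M \<beta>)" by (simp add: sets_D)
  have s: "K \<beta> -` A \<inter> space (X_M \<beta>) \<in> sets (X_M \<beta>)" using measurable_sets[OF K_meas A] .
  have s2: "inv -` A \<inter> space P_M \<in> sets P_M" using measurable_sets[OF inv_meas A] .
  have e: "inv -` (K \<beta> -` A \<inter> space (X_M \<beta>)) \<inter> space P_M = sshift -` (inv -` A \<inter> space P_M) \<inter> space P_M"
  proof -
    have "b \<in> inv -` (K \<beta> -` A \<inter> space (X_M \<beta>)) \<inter> space P_M \<longleftrightarrow> b \<in> sshift -` (inv -` A \<inter> space P_M) \<inter> space P_M" for b
    proof (cases "b \<in> Yset")
      case True
      have "b \<in> inv -` (K \<beta> -` A \<inter> space (X_M \<beta>)) \<inter> space P_M \<longleftrightarrow> inv (sshift b) \<in> A"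
        using True inv_space[OF True] by (simp add: K_inv[OF True] spaceP)
      moreover have "b \<in> sshift -` (inv -` A \<inter> space P_M) \<inter> space P_M \<longleftrightarrow> inv (sshift b) \<in> A"
        using True Y_shift[OF True] by (simp add: spaceP)
      ultimately show ?thesis by simp
    next
      case False thus ?thesis by (simp add: spaceP)
    qed
    thus ?thesis by blast
  qed
  show "emeasure D (K \<beta> -` A \<inter> space D) = emeasure D A"
    unfolding space_D emeasure_D[OF s] emeasure_D[OF A] e by (rule shift_inv[OF s2])
qed

lemma mp_shift: "mpreserving P_M sshift"
  unfolding mpreserving_def using shift_meas shift_inv by auto

lemma null_Z: "emeasure D (space D - Z \<beta>) = 0"
proof -
  have ZX: "Z \<beta> \<subseteq> space (X_M \<beta>)" by (auto simp: Z_def)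
  have s: "space (X_M \<beta>) - Z \<beta> \<in> sets (X_M \<beta>)" using Z_sets by auto
  have s2: "inv -` (space (X_M \<beta>) - Z \<beta>) \<inter> space P_M \<in> sets P_M" using measurable_sets[OF inv_meas s] .
  have "AE b in P_M. inv b \<in> Z \<beta>" using AE_G by eventually_elim (rule inv_Z)
  moreover have eq: "{b \<in> space P_M. \<not> inv b \<in> Z \<beta>} = inv -` (space (X_M \<beta>) - Z \<beta>) \<inter> space P_M"
    using inv_space unfolding spaceP by blast
  ultimately have "emeasure P_M (inv -` (space (X_M \<beta>) - Z \<beta>) \<inter> space P_M) = 0"
    using AE_iff_measurable[OF s2 eq] by simp
  thus ?thesis unfolding space_D emeasure_D[OF s] .
qed

lemma null_G: "emeasure P_M (space P_M - G) = 0"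
proof -
  have s: "space P_M - G \<in> sets P_M" using G_sets by auto
  have eq: "{b \<in> space P_M. \<not> b \<in> G} = space P_M - G" by auto
  show ?thesis using AE_iff_measurable[OF s eq] AE_G by simp
qed

lemma main:
  "(\<forall>A \<in> sets (X_M \<beta>). phi \<beta> ` (Z \<beta> \<inter> A) \<in> sets P_M) \<and>
   measure_space (space (X_M \<beta>)) (sets (X_M \<beta>)) (nu_fun \<beta>) \<and>
   mps_isomorphic (nu \<beta>) (K \<beta>) P_M sshift"
proof (intro conjI ballI)
  fix A assume "A \<in> sets (X_M \<beta>)" thus "phi \<beta> ` (Z \<beta> \<inter> A) \<in> sets P_M" by (rule image_sets)
next
  show "measure_space (space (X_M \<beta>)) (sets (X_M \<beta>)) (nu_fun \<beta>)" by (rule ms)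
next
  have ZX: "Z \<beta> \<subseteq> space (X_M \<beta>)" by (auto simp: Z_def)
  have phiD: "phi \<beta> \<in> measurable D P_M" unfolding meas_D by (rule phi_meas)
  have invD: "inv \<in> measurable P_M D" unfolding meas_D2 by (rule inv_meas)
  have m1: "phi \<beta> \<in> measurable (restrict_space D (Z \<beta>)) (restrict_space P_M G)"
    by (rule measurable_restrict_space3[OF phiD]) (auto intro: phi_G)
  have m2: "the_inv_into (Z \<beta>) (phi \<beta>) \<in> measurable (restrict_space P_M G) (restrict_space D (Z \<beta>))"
  proof (subst measurable_cong)
    fix w assume "w \<in> space (restrict_space P_M G)"
    hence "w \<in> G" by (simp add: space_restrict_space)
    thus "the_inv_into (Z \<beta>) (phi \<beta>) w = inv w" by (rule the_inv_phi)
  next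
    show "inv \<in> measurable (restrict_space P_M G) (restrict_space D (Z \<beta>))"
      by (rule measurable_restrict_space3[OF invD]) (auto intro: inv_Z)
  qed
  have m3: "\<forall>A \<in> sets P_M. emeasure D (phi \<beta> -` A \<inter> Z \<beta>) = emeasure P_M A"
  proof
    fix A assume A: "A \<in> sets P_M"
    have e1: "phi \<beta> -` A \<inter> Z \<beta> = (phi \<beta> -` A \<inter> space (X_M \<beta>)) \<inter> Z \<beta>" using ZX by auto
    have s: "phi \<beta> -` A \<inter> Z \<beta> \<in> sets (X_M \<beta>)"
      unfolding e1 using measurable_sets[OF phi_meas A] Z_sets by auto
    have s2: "inv -` (phi \<beta> -` A \<inter> Z \<beta>) \<inter> space P_M \<in> sets P_M" using measurable_sets[OF inv_meas s] .
    have "emeasure P_M (inv -` (phi \<beta> -` A \<inter> Z \<beta>) \<inter> space P_M) = emeasure P_M A"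
    proof (rule emeasure_eq_AE[OF _ s2 A])
      show "AE x in P_M. (x \<in> inv -` (phi \<beta> -` A \<inter> Z \<beta>) \<inter> space P_M) = (x \<in> A)"
        using AE_G AE_space
      proof eventually_elim
        case (elim x)
        hence "inv x \<in> Z \<beta>" "phi \<beta> (inv x) = x" using inv_Z phi_inv by (auto simp: G_def)
        thus ?case using elim by auto
      qed
    qed
    thus "emeasure D (phi \<beta> -` A \<inter> Z \<beta>) = emeasure P_M A" unfolding emeasure_D[OF s] .
  qed
  show "mps_isomorphic (nu \<beta>) (K \<beta>) P_M sshift"
    unfolding mps_isomorphic_def nu_D
  proof (intro conjI mp_K mp_shift exI[of _ "Z \<beta>"] exI[of _ G] exI[of _ "phi \<beta>"])
    show "Z \<beta> \<in> sets D" by (simp add: sets_D Z_sets)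
    show "G \<in> sets P_M" by (rule G_sets)
    show "emeasure D (space D - Z \<beta>) = 0" by (rule null_Z)
    show "emeasure P_M (space P_M - G) = 0" by (rule null_G)
    show "K \<beta> ` Z \<beta> \<subseteq> Z \<beta>" using Z_K by auto
    show "sshift ` G \<subseteq> G" using G_shift by auto
    show "bij_betw (phi \<beta>) (Z \<beta>) G" by (rule bij_phi)
    show "phi \<beta> \<in> measurable (restrict_space D (Z \<beta>)) (restrict_space P_M G)" by (rule m1)
    show "the_inv_into (Z \<beta>) (phi \<beta>) \<in> measurable (restrict_space P_M G) (restrict_space D (Z \<beta>))" by (rule m2)
    show "\<forall>x\<in>Z \<beta>. phi \<beta> (K \<beta> x) = sshift (phi \<beta> x)" by (simp add: phi_K)
    show "\<forall>A\<in>sets P_M. emeasure D (phi \<beta> -` A \<inter> Z \<beta>) = emeasure P_M A" by (rule m3)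
  qed
qed

end

theorem theorem4p6:
  fixes \<beta> :: real
  assumes "1 < \<beta>" and "\<beta> \<le> beta_star"
  shows "(\<forall>A \<in> sets (X_M \<beta>). phi \<beta> ` (Z \<beta> \<inter> A) \<in> sets P_M) \<and>
         measure_space (space (X_M \<beta>)) (sets (X_M \<beta>)) (nu_fun \<beta>) \<and>
         mps_isomorphic (nu \<beta>) (K \<beta>) P_M sshift"
proof -
  interpret bset \<beta> using assms by unfold_locales
  show ?thesis by (rule main)
qed


end
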